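(* Let $G$ be a non-cyclic group such that for any $x,y\in G$ with $\langle x,y\rangle=G$ there exists $z\in G$ with $\langle z,x\rangle\neq G$, $\langle z,y\rangle\neq G$ and $\langle z^{-1}x,z^{-1}y\rangle\neq G$. Then $|\mathcal{C}(G)|$ is simply connected.
   Context: For a group $G$, the coset poset $\mathcal{C}(G)$ is the set of all left cosets $xH$ of all proper subgroups $H<G$ (including the trivial subgroup), ordered by inclusion; $|\mathcal{C}(G)|$ is the geometric realization of its order complex (simplices = finite nonempty chains). *)

theory Defs
  imports "HOL-Analysis.Analysis" "HOL-Algebra.Algebra"
begin

definition coset_poset :: "('a, 'b) monoid_scheme \<Rightarrow> 'a set set" where
  "coset_poset G = {l_coset G x H | x H. x \<in> carrier G \<and> subgroup H G \<and> H \<noteq> carrier G}"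

definition order_complex :: "'v set set \<Rightarrow> 'v set set set" where
  "order_complex P = {S. S \<noteq> {} \<and> finite S \<and> S \<subseteq> P \<and> (\<forall>x\<in>S. \<forall>y\<in>S. x \<subseteq> y \<or> y \<subseteq> x)}"

text \<open>Closed geometric simplex spanned by a finite vertex set, as barycentric coordinate functions.\<close>
definition simplex_pts :: "'v set \<Rightarrow> ('v \<Rightarrow> real) set" where
  "simplex_pts \<sigma> = {f. (\<forall>v. 0 \<le> f v) \<and> (\<forall>v. v \<notin> \<sigma> \<longrightarrow> f v = 0) \<and> sum f \<sigma> = 1}"

definition realization_set :: "'v set set \<Rightarrow> ('v \<Rightarrow> real) set" where
  "realization_set K = (\<Union>\<sigma>\<in>K. simplex_pts \<sigma>)"

definition geom_realization :: "'v set set \<Rightarrow> ('v \<Rightarrow> real) topology" where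
  "geom_realization K = topology (\<lambda>U. U \<subseteq> realization_set K \<and>
     (\<forall>\<sigma>\<in>K. openin (subtopology euclidean (simplex_pts \<sigma>)) (U \<inter> simplex_pts \<sigma>)))"

text \<open>Simple connectedness for an abstract topological space, transcribed from the
  library's notion for sets: any two loops are homotopic as loops.\<close>
definition simply_connected_space :: "'a topology \<Rightarrow> bool" where
  "simply_connected_space TT \<longleftrightarrow>
     (\<forall>pp qq. pathin TT pp \<and> pp (1::real) = pp 0 \<and> pathin TT qq \<and> qq (1::real) = qq 0 \<longrightarrow>
        homotopic_with (\<lambda>rr. rr (1::real) = rr 0) (subtopology euclideanreal {0..1}) TT pp qq)"

end

theory Submission
  imports Defs
begin


lemma istopology_geom:
  "istopology (\<lambda>U. U \<subseteq> realization_set K \<and>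
     (\<forall>\<sigma>\<in>K. openin (top_of_set (simplex_pts \<sigma>)) (U \<inter> simplex_pts \<sigma>)))"
  unfolding istopology_def
  apply (intro conjI allI impI ballI)
  subgoal by blast
  subgoal for S T \<sigma>
  proof -
    assume a: "S \<subseteq> realization_set K \<and> (\<forall>\<sigma>\<in>K. openin (top_of_set (simplex_pts \<sigma>)) (S \<inter> simplex_pts \<sigma>))"
       "T \<subseteq> realization_set K \<and> (\<forall>\<sigma>\<in>K. openin (top_of_set (simplex_pts \<sigma>)) (T \<inter> simplex_pts \<sigma>))"
       "\<sigma> \<in> K"
    then have "openin (top_of_set (simplex_pts \<sigma>)) ((S \<inter> simplex_pts \<sigma>) \<inter> (T \<inter> simplex_pts \<sigma>))"
      by (intro openin_Int[of _ "S \<inter> simplex_pts \<sigma>" "T \<inter> simplex_pts \<sigma>"]) auto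
    moreover have "(S \<inter> simplex_pts \<sigma>) \<inter> (T \<inter> simplex_pts \<sigma>) = S \<inter> T \<inter> simplex_pts \<sigma>" by blast
    ultimately show ?thesis by simp
  qed
  subgoal by blast
  subgoal for KK \<sigma>
  proof -
    assume H: "\<forall>U\<in>KK. U \<subseteq> realization_set K \<and> (\<forall>\<sigma>\<in>K. openin (top_of_set (simplex_pts \<sigma>)) (U \<inter> simplex_pts \<sigma>))"
      "\<sigma> \<in> K"
    then have "openin (top_of_set (simplex_pts \<sigma>)) (\<Union>U\<in>KK. U \<inter> simplex_pts \<sigma>)"
      by (intro openin_Union) auto
    moreover have "(\<Union>U\<in>KK. U \<inter> simplex_pts \<sigma>) = \<Union>KK \<inter> simplex_pts \<sigma>" by blast
    ultimately show ?thesis by simp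
  qed
  done

lemma openin_geom:
  "openin (geom_realization K) U \<longleftrightarrow> U \<subseteq> realization_set K \<and>
     (\<forall>\<sigma>\<in>K. openin (top_of_set (simplex_pts \<sigma>)) (U \<inter> simplex_pts \<sigma>))"
  unfolding geom_realization_def topology_inverse'[OF istopology_geom] by simp

lemma simplex_sub_real: "\<sigma> \<in> K \<Longrightarrow> simplex_pts \<sigma> \<subseteq> realization_set K"
  unfolding realization_set_def by blast

lemma topspace_geom: "topspace (geom_realization K) = realization_set K"
proof -
  have "openin (geom_realization K) (realization_set K)"
    unfolding openin_geom
  proof (intro conjI ballI)
    fix \<sigma> assume "\<sigma> \<in> K"
    then have "realization_set K \<inter> simplex_pts \<sigma> = simplex_pts \<sigma>" using simplex_sub_real by blast
    then show "openin (top_of_set (simplex_pts \<sigma>)) (realization_set K \<inter> simplex_pts \<sigma>)" by simp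
  qed simp
  then show ?thesis
    using openin_subset[of "geom_realization K"] unfolding openin_geom
    by (metis openin_geom openin_topspace subset_antisym)
qed

lemma open_imp_openin_geom:
  assumes "open Ob" shows "openin (geom_realization K) (Ob \<inter> realization_set K)"
  unfolding openin_geom
proof (intro conjI ballI)
  fix \<sigma> assume "\<sigma> \<in> K"
  then have "Ob \<inter> realization_set K \<inter> simplex_pts \<sigma> = simplex_pts \<sigma> \<inter> Ob" using simplex_sub_real by blast
  then show "openin (top_of_set (simplex_pts \<sigma>)) (Ob \<inter> realization_set K \<inter> simplex_pts \<sigma>)"
    using assms by (simp add: openin_open_Int)
qed simp

lemma continuous_map_geom_imp:
  assumes "continuous_map TX (geom_realization K) f"
  shows "continuous_map TX (top_of_set (realization_set K)) f"
  unfolding continuous_map_def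
proof (intro conjI allI impI)
  show "f \<in> topspace TX \<rightarrow> topspace (top_of_set (realization_set K))"
    using assms by (simp add: continuous_map_def topspace_geom)
  fix U assume "openin (top_of_set (realization_set K)) U"
  then obtain Ob where Ob: "open Ob" "U = realization_set K \<inter> Ob" by (auto simp: openin_open)
  then have "openin (geom_realization K) (Ob \<inter> realization_set K)" by (simp add: open_imp_openin_geom)
  then have "openin TX {x \<in> topspace TX. f x \<in> Ob \<inter> realization_set K}"
    using assms unfolding continuous_map_def by blast
  moreover have "{x \<in> topspace TX. f x \<in> Ob \<inter> realization_set K} = {x \<in> topspace TX. f x \<in> U}"
    using Ob by blast
  ultimately show "openin TX {x \<in> topspace TX. f x \<in> U}" by simp
qed

lemma closed_simplex_pts: "closed (simplex_pts \<sigma>)"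
proof -
  have "simplex_pts \<sigma> = (\<Inter>v. {f. 0 \<le> f v}) \<inter> (\<Inter>v\<in>-\<sigma>. {f. f v = 0}) \<inter> {f. sum f \<sigma> = 1}"
    unfolding simplex_pts_def by auto
  moreover have "closed {f::'a\<Rightarrow>real. 0 \<le> f v}" for v
    by (intro closed_Collect_le continuous_intros) simp
  moreover have "closed {f::'a\<Rightarrow>real. f v = 0}" for v
    by (intro closed_Collect_eq continuous_intros) simp
  moreover have "closed {f::'a\<Rightarrow>real. sum f \<sigma> = 1}"
    by (intro closed_Collect_eq continuous_intros continuous_on_sum) simp
  ultimately show ?thesis by (metis closed_INT closed_Int)
qed

lemma closed_finite_fun: "finite (A :: ('a \<Rightarrow> real) set) \<Longrightarrow> closed A"
proof -
  have sing: "closed {x :: 'a \<Rightarrow> real}" for x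
  proof -
    have "{x} = (\<Inter>i. {f::'a\<Rightarrow>real. f i = x i})" by auto
    moreover have "closed {f::'a\<Rightarrow>real. f i = x i}" for i
      by (intro closed_Collect_eq continuous_intros) simp
    ultimately show ?thesis by auto
  qed
  assume "finite A"
  moreover have "A = (\<Union>a\<in>A. {a})" by blast
  ultimately show ?thesis using sing by (metis closed_UN)
qed

lemma continuous_map_into_geom:
  assumes "finite L" "L \<subseteq> K" "continuous_map TX (top_of_set (realization_set L)) f"
  shows "continuous_map TX (geom_realization K) f"
  unfolding continuous_map_def
proof (intro conjI allI impI)
  have RL: "realization_set L \<subseteq> realization_set K" using assms(2) unfolding realization_set_def by blast
  then show "f \<in> topspace TX \<rightarrow> topspace (geom_realization K)"
    using assms(3) by (auto simp: continuous_map_def topspace_geom)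
  fix U assume U: "openin (geom_realization K) U"
  define C where "C = (\<Union>\<sigma>\<in>L. simplex_pts \<sigma> - U)"
  have "closed (simplex_pts \<sigma> - U)" if "\<sigma> \<in> L" for \<sigma>
  proof -
    have "openin (top_of_set (simplex_pts \<sigma>)) (U \<inter> simplex_pts \<sigma>)"
      using U that assms(2) by (auto simp: openin_geom)
    moreover have "simplex_pts \<sigma> - (simplex_pts \<sigma> - (U \<inter> simplex_pts \<sigma>)) = U \<inter> simplex_pts \<sigma>" by blast
    ultimately have "closedin (top_of_set (simplex_pts \<sigma>)) (simplex_pts \<sigma> - (U \<inter> simplex_pts \<sigma>))"
      unfolding closedin_def by simp
    then have "closed (simplex_pts \<sigma> - (U \<inter> simplex_pts \<sigma>))"
      using closedin_closed_trans closed_simplex_pts by blast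
    moreover have "simplex_pts \<sigma> - (U \<inter> simplex_pts \<sigma>) = simplex_pts \<sigma> - U" by blast
    ultimately show ?thesis by simp
  qed
  then have "closed C" unfolding C_def using assms(1) by (intro closed_UN) auto
  then have "openin (top_of_set (realization_set L)) (realization_set L \<inter> (-C))"
    by (simp add: openin_open_Int inf_commute open_Compl)
  moreover have "realization_set L \<inter> (-C) = U \<inter> realization_set L"
    unfolding C_def realization_set_def by blast
  ultimately have "openin TX {x \<in> topspace TX. f x \<in> U \<inter> realization_set L}"
    using assms(3) unfolding continuous_map_def by metis
  moreover have "{x \<in> topspace TX. f x \<in> U \<inter> realization_set L} = {x \<in> topspace TX. f x \<in> U}"
    using assms(3) by (auto simp: continuous_map_def)
  ultimately show "openin TX {x \<in> topspace TX. f x \<in> U}" by simp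
qed


lemma compactin_geom_finite_supp:
  assumes cpt: "compactin (geom_realization K) C" and finK: "\<forall>\<sigma>\<in>K. finite \<sigma>"
  shows "\<exists>U. finite U \<and> (\<forall>f\<in>C. {v. f v \<noteq> 0} \<subseteq> U)"
proof -
  define supp :: "('a \<Rightarrow> real) \<Rightarrow> 'a set" where "supp f = {v. f v \<noteq> 0}" for f
  have Csub: "C \<subseteq> realization_set K"
    using cpt compactin_subset_topspace topspace_geom by metis
  have supp_in: "f \<in> simplex_pts \<sigma> \<Longrightarrow> supp f \<subseteq> \<sigma>" for f \<sigma>
    unfolding simplex_pts_def supp_def by auto
  have fin_supp: "finite (supp f)" if "f \<in> C" for f
  proof -
    have "f \<in> realization_set K" using that Csub by blast
    then obtain \<sigma> where "\<sigma> \<in> K" "f \<in> simplex_pts \<sigma>" unfolding realization_set_def by blast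
    then show ?thesis using finK supp_in finite_subset by metis
  qed
  define Sup where "Sup = supp ` C"
  have "finite Sup"
  proof (rule ccontr)
    assume inf: "infinite Sup"
    define g where "g s = (SOME f. f \<in> C \<and> supp f = s)" for s
    have g: "g s \<in> C \<and> supp (g s) = s" if "s \<in> Sup" for s
    proof -
      have "\<exists>f. f \<in> C \<and> supp f = s" using that unfolding Sup_def by blast
      then have "(SOME f. f \<in> C \<and> supp f = s) \<in> C \<and> supp (SOME f. f \<in> C \<and> supp f = s) = s"
        by (rule someI_ex)
      then show ?thesis by (simp add: g_def)
    qed
    define D where "D = g ` Sup"
    have "inj_on g Sup"
    proof (rule inj_onI)
      fix x y assume "x \<in> Sup" "y \<in> Sup" "g x = g y"
      then show "x = y" using g[of x] g[of y] by metis
    qed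
    then have infD: "infinite D" by (metis D_def finite_imageD inf)
    have DC: "D \<subseteq> C" unfolding D_def using g by auto
    have clD: "closedin (geom_realization K) A" if AD: "A \<subseteq> D" for A
    proof -
      have AR: "A \<subseteq> realization_set K" using AD DC Csub by blast
      have "openin (geom_realization K) (realization_set K - A)"
        unfolding openin_geom
      proof (intro conjI ballI)
        fix \<sigma> assume \<sigma>: "\<sigma> \<in> K"
        have "A \<inter> simplex_pts \<sigma> \<subseteq> g ` (Sup \<inter> Pow \<sigma>)"
        proof
          fix f assume f: "f \<in> A \<inter> simplex_pts \<sigma>"
          then obtain s where s: "s \<in> Sup" "f = g s" using AD unfolding D_def by blast
          then have "s \<subseteq> \<sigma>" using g[OF s(1)] supp_in f by blast
          then show "f \<in> g ` (Sup \<inter> Pow \<sigma>)" using s by blast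
        qed
        moreover have "finite (g ` (Sup \<inter> Pow \<sigma>))" using finK \<sigma> by simp
        ultimately have "closed (A \<inter> simplex_pts \<sigma>)" by (meson closed_finite_fun finite_subset)
        then have "open (- (A \<inter> simplex_pts \<sigma>))" by (rule open_Compl)
        then have "openin (top_of_set (simplex_pts \<sigma>)) (simplex_pts \<sigma> \<inter> - (A \<inter> simplex_pts \<sigma>))"
          by (rule openin_open_Int)
        moreover have "(realization_set K - A) \<inter> simplex_pts \<sigma> = simplex_pts \<sigma> \<inter> - (A \<inter> simplex_pts \<sigma>)"
          using simplex_sub_real[OF \<sigma>] by blast
        ultimately show "openin (top_of_set (simplex_pts \<sigma>)) ((realization_set K - A) \<inter> simplex_pts \<sigma>)"
          by simp
      qed blast
      then show ?thesis using AR by (simp add: closedin_def topspace_geom)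
    qed
    have opR: "openin (geom_realization K) (realization_set K - A)" if "A \<subseteq> D" for A
      using clD[OF that] by (simp add: closedin_def topspace_geom)
    define UU where "UU = (\<lambda>d. realization_set K - (D - {d})) ` D \<union> {realization_set K - D}"
    have "\<forall>U\<in>UU. openin (geom_realization K) U" unfolding UU_def by (auto intro!: opR)
    moreover have "C \<subseteq> \<Union>UU"
    proof
      fix x assume x: "x \<in> C"
      show "x \<in> \<Union>UU"
      proof (cases "x \<in> D")
        case True
        then have "realization_set K - (D - {x}) \<in> UU" unfolding UU_def by (intro UnI1 imageI)
        then show ?thesis using x Csub by blast
      next
        case False
        have "realization_set K - D \<in> UU" unfolding UU_def by simp
        then show ?thesis using x Csub False by blast
      qed
    qed
    ultimately have "\<exists>F. finite F \<and> F \<subseteq> UU \<and> C \<subseteq> \<Union>F"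
      using cpt unfolding compactin_def by blast
    then obtain F where F: "finite F" "F \<subseteq> UU" "C \<subseteq> \<Union>F" by blast
    have "F - {realization_set K - D} \<subseteq> (\<lambda>d. realization_set K - (D - {d})) ` D"
    proof
      fix U assume U: "U \<in> F - {realization_set K - D}"
      then have "U \<in> UU" "U \<noteq> realization_set K - D" using F(2) by auto
      then show "U \<in> (\<lambda>d. realization_set K - (D - {d})) ` D" unfolding UU_def by simp
    qed
    from finite_subset_image[OF finite_Diff[OF F(1)] this]
    obtain D0 where D0: "D0 \<subseteq> D" "finite D0"
      "F - {realization_set K - D} = (\<lambda>d. realization_set K - (D - {d})) ` D0"
      by (elim exE conjE)
    have "D \<subseteq> D0"
    proof
      fix x assume x: "x \<in> D"
      then have "x \<in> \<Union>F" using F(3) DC by auto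
      then obtain U where U: "U \<in> F" "x \<in> U" by auto
      then have "U \<noteq> realization_set K - D" using x by auto
      then have "U \<in> F - {realization_set K - D}" using U by simp
      then have "U \<in> (\<lambda>d. realization_set K - (D - {d})) ` D0" using D0(3) by simp
      then obtain d where "d \<in> D0" "U = realization_set K - (D - {d})" by auto
      then show "x \<in> D0" using U x by auto
    qed
    then show False using infD D0(2) finite_subset by metis
  qed
  moreover have "\<forall>s\<in>Sup. finite s" unfolding Sup_def using fin_supp by blast
  ultimately have "finite (\<Union>Sup)" by blast
  moreover have "\<forall>f\<in>C. {v. f v \<noteq> 0} \<subseteq> \<Union>Sup" unfolding Sup_def supp_def by blast
  ultimately show ?thesis by blast
qed


definition cmb :: "real \<Rightarrow> ('v \<Rightarrow> real) \<Rightarrow> ('v \<Rightarrow> real) \<Rightarrow> ('v \<Rightarrow> real)" where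
  "cmb t a b = (\<lambda>v. (1 - t) * a v + t * b v)"

definition lp :: "('v \<Rightarrow> real) \<Rightarrow> ('v \<Rightarrow> real) \<Rightarrow> real \<Rightarrow> ('v \<Rightarrow> real)" where
  "lp a b = (\<lambda>t. cmb t a b)"

definition cpath :: "'a \<Rightarrow> real \<Rightarrow> 'a" where "cpath a = (\<lambda>t. a)"

lemma continuous_on_cmb [continuous_intros]:
  assumes "continuous_on S f" "continuous_on S g" "continuous_on S h"
  shows "continuous_on S (\<lambda>x. cmb (f x) (g x) (h x))"
  unfolding cmb_def
proof (rule continuous_on_coordinatewise_then_product)
  fix i
  have "continuous_on S (\<lambda>x. g x i)" "continuous_on S (\<lambda>x. h x i)"
    using assms(2,3) by (auto intro: continuous_on_product_then_coordinatewise)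
  then show "continuous_on S (\<lambda>x. (1 - f x) * g x i + f x * h x i)"
    by (intro continuous_intros assms(1))
qed

lemma cmb_same [simp]: "cmb t a a = a" by (simp add: cmb_def algebra_simps)
lemma cmb_0 [simp]: "cmb 0 a b = a" by (simp add: cmb_def)
lemma cmb_1 [simp]: "cmb 1 a b = b" by (simp add: cmb_def)

lemma path_lp [simp]: "path (lp a b)"
  unfolding path_def lp_def by (intro continuous_intros)
lemma lp_start [simp]: "pathstart (lp a b) = a" by (simp add: pathstart_def lp_def)
lemma lp_finish [simp]: "pathfinish (lp a b) = b" by (simp add: pathfinish_def lp_def)
lemma reversepath_lp [simp]: "reversepath (lp a b) = lp b a"
  by (auto simp: reversepath_def lp_def cmb_def algebra_simps)

lemma path_cpath [simp]: "path (cpath a)" unfolding path_def cpath_def by simp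
lemma cpath_start [simp]: "pathstart (cpath a) = a" by (simp add: pathstart_def cpath_def)
lemma cpath_finish [simp]: "pathfinish (cpath a) = a" by (simp add: pathfinish_def cpath_def)
lemma reversepath_cpath [simp]: "reversepath (cpath a) = cpath a"
  by (simp add: reversepath_def cpath_def)
lemma path_image_cpath [simp]: "path_image (cpath a) = {a}"
  by (auto simp: path_image_def cpath_def)

lemma hp_rid:
  assumes "path p" "path_image p \<subseteq> S"
  shows "homotopic_paths S (p +++ cpath (pathfinish p)) p"
proof -
  have \<section>: "continuous_on {0..1} (\<lambda>t::real. if t \<le> 1/2 then 2 *\<^sub>R t else 1)"
    unfolding split_01
    by (rule continuous_on_cases continuous_intros | force simp: pathfinish_def joinpaths_def)+
  show ?thesis
    apply (rule homotopic_paths_sym)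
    using assms unfolding pathfinish_def joinpaths_def cpath_def
    by (intro \<section> continuous_on_cases continuous_intros homotopic_paths_reparametrize [where f = "\<lambda>t. if t \<le> 1/2 then 2 *\<^sub>R t else 1"]; force)
qed

lemma hp_lid:
  assumes "path p" "path_image p \<subseteq> S"
  shows "homotopic_paths S (cpath (pathstart p) +++ p) p"
proof -
  have "homotopic_paths S (reversepath p +++ cpath (pathfinish (reversepath p))) (reversepath p)"
    using assms by (intro hp_rid) auto
  then have "homotopic_paths S (reversepath (reversepath p +++ cpath (pathfinish (reversepath p)))) p"
    using homotopic_paths_reversepath by fastforce
  moreover have "reversepath (reversepath p +++ cpath (pathfinish (reversepath p))) = cpath (pathstart p) +++ p"
    by (simp add: reversepath_joinpaths)
  ultimately show ?thesis by simp
qed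

lemma hp_rinv:
  assumes "path p" "path_image p \<subseteq> S"
    shows "homotopic_paths S (p +++ reversepath p) (cpath (pathstart p))"
proof -
  have p: "continuous_on {0..1} p" 
    using assms by (auto simp: path_def)
  let ?A = "{0..1} \<times> {0..1}"
  define sp where "sp = (\<lambda>s::real. \<lambda>x::real. p (s * x))"
  have "continuous_on ?A (\<lambda>x. (sp (fst x) +++ reversepath (sp (fst x))) (snd x))"
    unfolding joinpaths_def sp_def reversepath_def path_def add_0_right diff_0_right
  proof (rule continuous_on_cases_le)
    show "continuous_on {x \<in> ?A. snd x \<le> 1/2} (\<lambda>t. p (fst t * (2 * snd t)))"
         "continuous_on {x \<in> ?A. 1/2 \<le> snd x} (\<lambda>t. p (fst t * (1 - (2 * snd t - 1))))"
         "continuous_on ?A snd"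
      by (intro continuous_on_compose2 [OF p] continuous_intros; auto simp: mult_le_one)+
  qed (auto simp: algebra_simps)
  then show ?thesis
    using assms
    apply (subst homotopic_paths_sym_eq)
    unfolding homotopic_paths_def homotopic_with_def
    apply (rule_tac x="(\<lambda>y. (sp (fst y) +++ reversepath(sp (fst y))) (snd y))" in exI)
    apply (force simp: mult_le_one path_defs joinpaths_def sp_def reversepath_def cpath_def)
    done
qed

lemma hp_linv:
  assumes "path p" "path_image p \<subseteq> S"
    shows "homotopic_paths S (reversepath p +++ p) (cpath (pathfinish p))"
  using hp_rinv [of "reversepath p" S] assms by simp

lemma square_homotopy:
  fixes h :: "real \<times> real \<Rightarrow> 'a::topological_space"
  assumes h: "continuous_on ({0..1}\<times>{0..1}) h" and hS: "h ` ({0..1}\<times>{0..1}) \<subseteq> S"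
  shows "homotopic_paths S (\<lambda>t. h (0,t))
           ((\<lambda>s. h (s,0)) +++ ((\<lambda>t. h (1,t)) +++ reversepath (\<lambda>s. h (s,1))))"
proof -
  define L where "L = (\<lambda>l::real. \<lambda>s::real. h (l * s, 0))"
  define M where "M = (\<lambda>l::real. \<lambda>t::real. h (l, t))"
  define R where "R = (\<lambda>l::real. reversepath (\<lambda>s::real. h (l * s, 1)))"
  let ?A = "{0..1::real}\<times>{0..1::real}"
  have mem: "(a, b) \<in> ?A" if "a \<in> {0..1}" "b \<in> {0..1}" for a b using that by auto
  have contL: "continuous_on ?A (\<lambda>y. L (fst y) (snd y))"
    unfolding L_def
    by (rule continuous_on_compose2[OF h]) (auto intro!: continuous_intros simp: mult_le_one)
  have contM: "continuous_on ?A (\<lambda>y. M (fst y) (snd y))"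
    unfolding M_def using h by simp
  have contR: "continuous_on ?A (\<lambda>y. R (fst y) (snd y))"
    unfolding R_def reversepath_def
    by (rule continuous_on_compose2[OF h]) (auto intro!: continuous_intros simp: mult_le_one)
  have contMR: "continuous_on ?A (\<lambda>y. (M (fst y) +++ R (fst y)) (snd y))"
    by (rule continuous_on_homotopic_join_lemma[OF contM contR])
       (simp add: M_def R_def pathfinish_def pathstart_def reversepath_def)
  have contH: "continuous_on ?A (\<lambda>y. (L (fst y) +++ (M (fst y) +++ R (fst y))) (snd y))"
    by (rule continuous_on_homotopic_join_lemma[OF contL contMR])
       (simp add: L_def M_def R_def pathfinish_def pathstart_def reversepath_def joinpaths_def)
  have imL: "path_image (L l) \<subseteq> S" if "l \<in> {0..1}" for l
  proof -
    have "h (l * s, 0) \<in> S" if "s \<in> {0..1}" for s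
    proof -
      have "(l * s, 0) \<in> ?A" using that \<open>l \<in> {0..1}\<close> by (auto simp: mult_le_one)
      then show ?thesis using hS by blast
    qed
    then show ?thesis by (auto simp: path_image_def L_def)
  qed
  have imM: "path_image (M l) \<subseteq> S" if "l \<in> {0..1}" for l
  proof -
    have "h (l, s) \<in> S" if "s \<in> {0..1}" for s
    proof -
      have "(l, s) \<in> ?A" using that \<open>l \<in> {0..1}\<close> by auto
      then show ?thesis using hS by blast
    qed
    then show ?thesis by (auto simp: path_image_def M_def)
  qed
  have imR: "path_image (R l) \<subseteq> S" if "l \<in> {0..1}" for l
  proof -
    have "h (l * s, 1) \<in> S" if "s \<in> {0..1}" for s
    proof -
      have "(l * s, 1) \<in> ?A" using that \<open>l \<in> {0..1}\<close> by (auto simp: mult_le_one)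
      then show ?thesis using hS by blast
    qed
    then have "path_image (\<lambda>s. h (l * s, 1)) \<subseteq> S" by (auto simp: path_image_def)
    then show ?thesis by (simp add: R_def path_image_reversepath)
  qed
  have imH: "(L l +++ (M l +++ R l)) t \<in> S" if "l \<in> {0..1}" "t \<in> {0..1}" for l t
  proof -
    have a: "(L l +++ (M l +++ R l)) t \<in> path_image (L l +++ (M l +++ R l))"
      using that by (simp add: path_image_def)
    have b: "path_image (M l +++ R l) \<subseteq> path_image (M l) \<union> path_image (R l)"
      by (rule path_image_join_subset)
    have c: "path_image (L l +++ (M l +++ R l)) \<subseteq> path_image (L l) \<union> path_image (M l +++ R l)"
      by (rule path_image_join_subset)
    show ?thesis using a b c imL[OF that(1)] imM[OF that(1)] imR[OF that(1)] by blast
  qed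
  have H: "homotopic_paths S (L 0 +++ (M 0 +++ R 0)) (L 1 +++ (M 1 +++ R 1))"
    unfolding homotopic_paths
  proof (intro exI conjI ballI)
    show "continuous_on ?A (\<lambda>y. (L (fst y) +++ (M (fst y) +++ R (fst y))) (snd y))" by (rule contH)
    show "(\<lambda>y. (L (fst y) +++ (M (fst y) +++ R (fst y))) (snd y)) \<in> ?A \<rightarrow> S"
      using imH by auto
  qed (auto simp: pathstart_def pathfinish_def joinpaths_def L_def R_def reversepath_def)
  have L0: "L 0 = cpath (h (0,0))" by (simp add: L_def cpath_def)
  have R0: "R 0 = cpath (h (0,1))" by (simp add: R_def cpath_def reversepath_def)
  have L1: "L 1 = (\<lambda>s. h (s,0))" by (simp add: L_def)
  have R1: "R 1 = reversepath (\<lambda>s. h (s,1))" by (simp add: R_def)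
  have M0: "M 0 = (\<lambda>t. h (0,t))" "M 1 = (\<lambda>t. h (1,t))" by (simp_all add: M_def)
  have pM0: "path (\<lambda>t. h (0,t))"
    unfolding path_def by (rule continuous_on_compose2[OF h]) (auto intro!: continuous_intros)
  have iM0: "path_image (\<lambda>t. h (0,t)) \<subseteq> S" using imM[of 0] M0 by simp
  have "homotopic_paths S (\<lambda>t. h (0,t)) (cpath (h (0,0)) +++ ((\<lambda>t. h (0,t)) +++ cpath (h (0,1))))"
  proof -
    have 1: "homotopic_paths S ((\<lambda>t. h (0,t)) +++ cpath (h (0,1))) (\<lambda>t. h (0,t))"
      using hp_rid[OF pM0 iM0] by (simp add: pathfinish_def)
    have 2: "homotopic_paths S (cpath (h (0,0)) +++ (\<lambda>t. h (0,t))) (\<lambda>t. h (0,t))"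
      using hp_lid[OF pM0 iM0] by (simp add: pathstart_def)
    have "(0,0) \<in> ?A" by auto
    then have c0: "homotopic_paths S (cpath (h (0,0))) (cpath (h (0,0)))" using hS by auto
    have 3: "homotopic_paths S (cpath (h (0,0)) +++ ((\<lambda>t. h (0,t)) +++ cpath (h (0,1))))
                                (cpath (h (0,0)) +++ (\<lambda>t. h (0,t)))"
      by (rule homotopic_paths_join[OF c0 1]) (simp add: pathstart_def joinpaths_def)
    show ?thesis using homotopic_paths_trans[OF 3 2] homotopic_paths_sym by blast
  qed
  then show ?thesis using H L0 R0 L1 R1 M0 homotopic_paths_trans by metis
qed

lemma seg_homotopy:
  fixes p q :: "real \<Rightarrow> 'v \<Rightarrow> real"
  assumes pp: "path p" and pq: "path q" and st: "pathstart p = pathstart q"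
    and fi: "pathfinish p = pathfinish q"
    and inS: "\<And>t l. t \<in> {0..1} \<Longrightarrow> l \<in> {0..1} \<Longrightarrow> cmb l (p t) (q t) \<in> S"
  shows "homotopic_paths S p q"
proof -
  define h where "h = (\<lambda>y::real\<times>real. cmb (fst y) (p (snd y)) (q (snd y)))"
  have cp: "continuous_on ({0..1}\<times>{0..1}) (\<lambda>y::real\<times>real. p (snd y))"
    using pp unfolding path_def by (rule continuous_on_compose2) (auto intro!: continuous_intros)
  have cq: "continuous_on ({0..1}\<times>{0..1}) (\<lambda>y::real\<times>real. q (snd y))"
    using pq unfolding path_def by (rule continuous_on_compose2) (auto intro!: continuous_intros)
  have ch: "continuous_on ({0..1}\<times>{0..1}) h"
    unfolding h_def by (intro continuous_on_cmb cp cq continuous_intros)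
  have hS: "h ` ({0..1}\<times>{0..1}) \<subseteq> S"
    unfolding h_def using inS by auto
  have sq: "homotopic_paths S (\<lambda>t. h (0,t))
           ((\<lambda>s. h (s,0)) +++ ((\<lambda>t. h (1,t)) +++ reversepath (\<lambda>s. h (s,1))))"
    by (rule square_homotopy[OF ch hS])
  have e1: "(\<lambda>t. h (0,t)) = p" "(\<lambda>t. h (1,t)) = q" by (auto simp: h_def)
  have e2: "(\<lambda>s. h (s,0)) = cpath (pathstart q)" "(\<lambda>s. h (s,1)) = cpath (pathfinish q)"
    using st fi by (auto simp: h_def cpath_def pathstart_def pathfinish_def)
  have iq: "path_image q \<subseteq> S"
  proof -
    have "q t \<in> S" if "t \<in> {0..1}" for t using inS[OF that, of 1] by simp
    then show ?thesis by (auto simp: path_image_def)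
  qed
  have "homotopic_paths S (cpath (pathstart q) +++ (q +++ cpath (pathfinish q))) q"
  proof -
    have 1: "homotopic_paths S (q +++ cpath (pathfinish q)) q" by (rule hp_rid[OF pq iq])
    have "pathstart q \<in> S" using iq pathstart_in_path_image by blast
    then have c0: "homotopic_paths S (cpath (pathstart q)) (cpath (pathstart q))" by auto
    have 2: "homotopic_paths S (cpath (pathstart q) +++ (q +++ cpath (pathfinish q))) (cpath (pathstart q) +++ q)"
      by (rule homotopic_paths_join[OF c0 1]) simp
    show ?thesis using homotopic_paths_trans[OF 2 hp_lid[OF pq iq]] .
  qed
  then show ?thesis using sq e1 e2 homotopic_paths_trans by fastforce
qed

lemma star_homotopy:
  fixes q :: "real \<Rightarrow> 'v \<Rightarrow> real"
  assumes pq: "path q"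
    and inS: "\<And>t l. t \<in> {0..1} \<Longrightarrow> l \<in> {0..1} \<Longrightarrow> cmb l (q t) c \<in> S"
  shows "homotopic_paths S q (lp (pathstart q) c +++ lp c (pathfinish q))"
proof -
  define h where "h = (\<lambda>y::real\<times>real. cmb (fst y) (q (snd y)) c)"
  have cq: "continuous_on ({0..1}\<times>{0..1}) (\<lambda>y::real\<times>real. q (snd y))"
    using pq unfolding path_def by (rule continuous_on_compose2) (auto intro!: continuous_intros)
  have ch: "continuous_on ({0..1}\<times>{0..1}) h"
    unfolding h_def by (intro continuous_on_cmb cq continuous_intros)
  have hS: "h ` ({0..1}\<times>{0..1}) \<subseteq> S"
    unfolding h_def using inS by auto
  have sq: "homotopic_paths S (\<lambda>t. h (0,t))
           ((\<lambda>s. h (s,0)) +++ ((\<lambda>t. h (1,t)) +++ reversepath (\<lambda>s. h (s,1))))"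
    by (rule square_homotopy[OF ch hS])
  have e1: "(\<lambda>t. h (0,t)) = q" "(\<lambda>t. h (1,t)) = cpath c" by (auto simp: h_def cpath_def)
  have e2: "(\<lambda>s. h (s,0)) = lp (pathstart q) c" "(\<lambda>s. h (s,1)) = lp (pathfinish q) c"
    by (auto simp: h_def lp_def pathstart_def pathfinish_def)
  have ilp: "path_image (lp (pathfinish q) c) \<subseteq> S"
  proof -
    have "cmb l (q 1) c \<in> S" if "l \<in> {0..1}" for l using inS[OF _ that, of 1] by simp
    then show ?thesis by (auto simp: path_image_def lp_def pathfinish_def)
  qed
  have ilp0: "path_image (lp (pathstart q) c) \<subseteq> S"
  proof -
    have "cmb l (q 0) c \<in> S" if "l \<in> {0..1}" for l using inS[OF _ that, of 0] by simp
    then show ?thesis by (auto simp: path_image_def lp_def pathstart_def)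
  qed
  have ilp2: "path_image (lp c (pathfinish q)) \<subseteq> S"
    using ilp path_image_reversepath[of "lp (pathfinish q) c"] by simp
  have "homotopic_paths S (lp (pathstart q) c +++ (cpath c +++ lp c (pathfinish q)))
                           (lp (pathstart q) c +++ lp c (pathfinish q))"
  proof -
    have 1: "homotopic_paths S (cpath c +++ lp c (pathfinish q)) (lp c (pathfinish q))"
      using hp_lid[OF path_lp ilp2] by simp
    have c0: "homotopic_paths S (lp (pathstart q) c) (lp (pathstart q) c)" using ilp0 by simp
    show ?thesis by (rule homotopic_paths_join[OF c0 1]) simp
  qed
  then show ?thesis using sq e1 e2 homotopic_paths_trans by fastforce
qed

definition sp :: "real \<Rightarrow> real \<Rightarrow> (real \<Rightarrow> 'a) \<Rightarrow> real \<Rightarrow> 'a" where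
  "sp u w g = (\<lambda>x. g ((w - u) * x + u))"

lemma sp_start [simp]: "pathstart (sp u w g) = g u" by (simp add: sp_def pathstart_def)
lemma sp_finish [simp]: "pathfinish (sp u w g) = g w" by (simp add: sp_def pathfinish_def)

lemma sp_aff_mem: "(u::real) \<in> {0..1} \<Longrightarrow> w \<in> {0..1} \<Longrightarrow> u \<le> w \<Longrightarrow> x \<in> {0..1} \<Longrightarrow> (w - u) * x + u \<in> {0..1}"
proof -
  assume a: "u \<in> {0..1}" "w \<in> {0..1}" "u \<le> w" "x \<in> {0..1}"
  have "(w - u) * x \<le> (w - u) * 1" by (rule mult_left_mono) (use a in auto)
  moreover have "0 \<le> (w - u) * x" using a by auto
  ultimately show ?thesis using a by auto
qed

lemma path_sp:
  assumes "path g" "u \<in> {0..1}" "w \<in> {0..1}" "u \<le> w"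
  shows "path (sp u w g)" "path_image g \<subseteq> S \<Longrightarrow> path_image (sp u w g) \<subseteq> S"
proof -
  show "path (sp u w g)"
    using assms(1) unfolding path_def sp_def
    by (rule continuous_on_compose2) (auto intro!: continuous_intros sp_aff_mem[OF assms(2-4)])
  show "path_image g \<subseteq> S \<Longrightarrow> path_image (sp u w g) \<subseteq> S"
    using sp_aff_mem[OF assms(2-4)] by (auto simp: path_image_def sp_def)
qed

lemma sp_01 [simp]: "sp 0 1 g = g" by (simp add: sp_def)

lemma join_sp:
  assumes pg: "path g" and ig: "path_image g \<subseteq> S"
    and uvw: "0 \<le> u" "u \<le> v" "v \<le> w" "w \<le> 1" "u < w"
  shows "homotopic_paths S (sp u v g +++ sp v w g) (sp u w g)"
proof -
  define a where "a = (v - u) / (w - u)"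
  have a01: "0 \<le> a" "a \<le> 1" using uvw by (auto simp: a_def divide_le_eq_1)
  have wa: "(w - u) * a = v - u" using uvw by (simp add: a_def)
  define f where "f = (\<lambda>t::real. if t \<le> 1/2 then 2 * t * a else a + (2 * t - 1) * (1 - a))"
  have cf: "continuous_on {0..1} f"
    unfolding f_def split_01
  proof (rule continuous_on_cases)
    show "\<forall>t. t \<in> {0..1 / 2} \<and> \<not> t \<le> 1 / 2 \<or> t \<in> {1 / 2..1::real} \<and> t \<le> 1 / 2 \<longrightarrow>
         2 * t * a = a + (2 * t - 1) * (1 - a)"
    proof (intro allI impI)
      fix t :: real assume "t \<in> {0..1 / 2} \<and> \<not> t \<le> 1 / 2 \<or> t \<in> {1 / 2..1} \<and> t \<le> 1 / 2"
      then have "t = 1/2" by auto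
      then show "2 * t * a = a + (2 * t - 1) * (1 - a)" by (simp add: algebra_simps)
    qed
  qed (auto intro!: continuous_intros)
  have f01: "f \<in> {0..1} \<rightarrow> {0..1}"
  proof
    fix t :: real assume t: "t \<in> {0..1}"
    show "f t \<in> {0..1}"
    proof (cases "t \<le> 1/2")
      case True
      then have "2 * t * a \<le> 1 * 1" using t a01 by (intro mult_mono) auto
      then show ?thesis using True t a01 by (simp add: f_def)
    next
      case False
      then have "(2 * t - 1) * (1 - a) \<le> 1 * (1 - a)" using t a01 by (intro mult_right_mono) auto
      then show ?thesis using False t a01 by (simp add: f_def)
    qed
  qed
  have psp: "path (sp u w g)" "path_image (sp u w g) \<subseteq> S"
    using path_sp(1)[OF pg, of u w] path_sp(2)[OF pg, of u w S] uvw ig by auto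
  have "homotopic_paths S (sp u w g) (sp u v g +++ sp v w g)"
  proof (rule homotopic_paths_reparametrize[OF psp cf f01])
    show "f 0 = 0" "f 1 = 1" by (auto simp: f_def)
    fix t :: real assume t: "t \<in> {0..1}"
    show "(sp u v g +++ sp v w g) t = sp u w g (f t)"
    proof (cases "t \<le> 1/2")
      case True
      have "(w - u) * (2 * t * a) + u = 2 * t * ((w - u) * a) + u" by (simp add: algebra_simps)
      also have "\<dots> = 2 * t * (v - u) + u" by (simp only: wa)
      also have "\<dots> = (v - u) * (2 * t) + u" by (simp add: algebra_simps)
      finally have eq: "(w - u) * (2 * t * a) + u = (v - u) * (2 * t) + u" .
      have "(sp u v g +++ sp v w g) t = g ((v - u) * (2 * t) + u)" using True by (simp add: joinpaths_def sp_def)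
      moreover have "sp u w g (f t) = g ((w - u) * (2 * t * a) + u)" using True by (simp add: sp_def f_def)
      ultimately show ?thesis using eq by metis
    next
      case False
      have "(w - u) * (a + (2 * t - 1) * (1 - a)) + u = (w - u) * a + (2 * t - 1) * ((w - u) - (w - u) * a) + u"
        by (simp add: algebra_simps)
      also have "\<dots> = (v - u) + (2 * t - 1) * ((w - u) - (v - u)) + u" by (simp only: wa)
      also have "\<dots> = (w - v) * (2 * t - 1) + v" by (simp add: algebra_simps)
      finally have eq: "(w - u) * (a + (2 * t - 1) * (1 - a)) + u = (w - v) * (2 * t - 1) + v" .
      have "(sp u v g +++ sp v w g) t = g ((w - v) * (2 * t - 1) + v)" using False by (simp add: joinpaths_def sp_def)
      moreover have "sp u w g (f t) = g ((w - u) * (a + (2 * t - 1) * (1 - a)) + u)" using False by (simp add: sp_def f_def)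
      ultimately show ?thesis using eq by metis
    qed
  qed
  then show ?thesis by (rule homotopic_paths_sym)
qed


definition XU :: "'v set set \<Rightarrow> 'v set set \<Rightarrow> ('v set \<Rightarrow> real) set" where
  "XU P U = realization_set (order_complex (P \<inter> U))"

definition dlt :: "'a \<Rightarrow> 'a \<Rightarrow> real" where "dlt v = (\<lambda>w. if w = v then 1 else 0)"

definition okp :: "'v set set \<Rightarrow> (real \<Rightarrow> 'v set \<Rightarrow> real) \<Rightarrow> bool" where
  "okp P p \<longleftrightarrow> path p \<and> (\<exists>U. finite U \<and> path_image p \<subseteq> XU P U)"

definition HP :: "'v set set \<Rightarrow> (real \<Rightarrow> 'v set \<Rightarrow> real) \<Rightarrow> (real \<Rightarrow> 'v set \<Rightarrow> real) \<Rightarrow> bool" where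
  "HP P p q \<longleftrightarrow> (\<exists>U. finite U \<and> homotopic_paths (XU P U) p q)"

lemma order_complex_mono: "A \<subseteq> B \<Longrightarrow> order_complex A \<subseteq> order_complex B"
  unfolding order_complex_def by auto

lemma XU_mono: "U \<subseteq> U' \<Longrightarrow> XU P U \<subseteq> XU P U'"
proof -
  assume "U \<subseteq> U'"
  then have "order_complex (P \<inter> U) \<subseteq> order_complex (P \<inter> U')"
    by (intro order_complex_mono) blast
  then show ?thesis unfolding XU_def realization_set_def by blast
qed

lemma HP_trans: "HP P p q \<Longrightarrow> HP P q r \<Longrightarrow> HP P p r"
proof -
  assume "HP P p q" "HP P q r"
  then obtain U V where U: "finite U" "homotopic_paths (XU P U) p q"
    and V: "finite V" "homotopic_paths (XU P V) q r" unfolding HP_def by blast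
  have "homotopic_paths (XU P (U \<union> V)) p q"
    using U(2) XU_mono[of U "U \<union> V" P] homotopic_paths_subset by blast
  moreover have "homotopic_paths (XU P (U \<union> V)) q r"
    using V(2) XU_mono[of V "U \<union> V" P] homotopic_paths_subset by blast
  ultimately show ?thesis unfolding HP_def using U(1) V(1)
    by (meson finite_UnI homotopic_paths_trans)
qed

lemma HP_sym: "HP P p q \<Longrightarrow> HP P q p"
  unfolding HP_def using homotopic_paths_sym by blast

lemma HP_join: "HP P p p' \<Longrightarrow> HP P q q' \<Longrightarrow> pathfinish p = pathstart q \<Longrightarrow> HP P (p +++ q) (p' +++ q')"
proof -
  assume "HP P p p'" "HP P q q'" and e: "pathfinish p = pathstart q"
  then obtain U V where U: "finite U" "homotopic_paths (XU P U) p p'"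
    and V: "finite V" "homotopic_paths (XU P V) q q'" unfolding HP_def by blast
  have "homotopic_paths (XU P (U \<union> V)) p p'"
    using U(2) XU_mono[of U "U \<union> V" P] homotopic_paths_subset by blast
  moreover have "homotopic_paths (XU P (U \<union> V)) q q'"
    using V(2) XU_mono[of V "U \<union> V" P] homotopic_paths_subset by blast
  ultimately have "homotopic_paths (XU P (U \<union> V)) (p +++ q) (p' +++ q')"
    using e by (rule homotopic_paths_join)
  then show ?thesis unfolding HP_def using U(1) V(1) by blast
qed

lemma okp_HP: "okp P p \<Longrightarrow> HP P p p"
  unfolding okp_def HP_def by auto

lemma HP_okp: "HP P p q \<Longrightarrow> okp P p \<and> okp P q"
  unfolding okp_def HP_def
  by (meson homotopic_paths_imp_path homotopic_paths_imp_subset)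

lemma HP_start: "HP P p q \<Longrightarrow> pathstart p = pathstart q"
  unfolding HP_def using homotopic_paths_imp_pathstart by blast

lemma HP_finish: "HP P p q \<Longrightarrow> pathfinish p = pathfinish q"
  unfolding HP_def using homotopic_paths_imp_pathfinish by blast

lemma okp_common:
  assumes "okp P p" "okp P q"
  obtains U where "finite U" "path p" "path q" "path_image p \<subseteq> XU P U" "path_image q \<subseteq> XU P U"
proof -
  obtain U V where U: "finite U" "path_image p \<subseteq> XU P U" and V: "finite V" "path_image q \<subseteq> XU P V"
    using assms unfolding okp_def by blast
  have "path_image p \<subseteq> XU P (U \<union> V)" "path_image q \<subseteq> XU P (U \<union> V)"
    using U V XU_mono[of U "U \<union> V" P] XU_mono[of V "U \<union> V" P] by blast+
  then show ?thesis using that U(1) V(1) assms unfolding okp_def by blast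
qed

lemma okp_join: "okp P p \<Longrightarrow> okp P q \<Longrightarrow> pathfinish p = pathstart q \<Longrightarrow> okp P (p +++ q)"
proof -
  assume a: "okp P p" "okp P q" "pathfinish p = pathstart q"
  obtain U where U: "finite U" "path p" "path q" "path_image p \<subseteq> XU P U" "path_image q \<subseteq> XU P U"
    using a(1,2) by (rule okp_common)
  have "path_image (p +++ q) \<subseteq> XU P U"
    using U path_image_join_subset[of p q] by blast
  then show ?thesis unfolding okp_def using U a(3) by auto
qed

lemma okp_rev: "okp P p \<Longrightarrow> okp P (reversepath p)"
  unfolding okp_def by (simp add: path_image_reversepath)

lemma HP_assoc:
  assumes "okp P p" "okp P q" "okp P r" "pathfinish p = pathstart q" "pathfinish q = pathstart r"
  shows "HP P (p +++ (q +++ r)) ((p +++ q) +++ r)"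
proof -
  obtain U where U: "finite U" "path p" "path q" "path_image p \<subseteq> XU P U" "path_image q \<subseteq> XU P U"
    using assms(1,2) by (rule okp_common)
  obtain V where V: "finite V" "path r" "path_image r \<subseteq> XU P V"
    using assms(3) unfolding okp_def by blast
  have "path_image p \<subseteq> XU P (U \<union> V)" "path_image q \<subseteq> XU P (U \<union> V)" "path_image r \<subseteq> XU P (U \<union> V)"
    using U V XU_mono[of U "U \<union> V" P] XU_mono[of V "U \<union> V" P] by blast+
  then have "homotopic_paths (XU P (U \<union> V)) (p +++ (q +++ r)) ((p +++ q) +++ r)"
    using U V assms(4,5) by (intro homotopic_paths_assoc) auto
  then show ?thesis unfolding HP_def using U(1) V(1) by blast
qed

lemma HP_lid: "okp P p \<Longrightarrow> HP P (cpath (pathstart p) +++ p) p"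
  unfolding okp_def HP_def using hp_lid by blast
lemma HP_rid: "okp P p \<Longrightarrow> HP P (p +++ cpath (pathfinish p)) p"
  unfolding okp_def HP_def using hp_rid by blast
lemma HP_rinv: "okp P p \<Longrightarrow> HP P (p +++ reversepath p) (cpath (pathstart p))"
  unfolding okp_def HP_def using hp_rinv by blast
lemma HP_linv: "okp P p \<Longrightarrow> HP P (reversepath p +++ p) (cpath (pathfinish p))"
  unfolding okp_def HP_def using hp_linv by blast

lemma HP_congL: "HP P q q' \<Longrightarrow> okp P p \<Longrightarrow> pathfinish p = pathstart q \<Longrightarrow> HP P (p +++ q) (p +++ q')"
  using HP_join okp_HP by blast
lemma HP_congR: "HP P p p' \<Longrightarrow> okp P q \<Longrightarrow> pathfinish p = pathstart q \<Longrightarrow> HP P (p +++ q) (p' +++ q)"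
  using HP_join okp_HP by blast

lemma chain_oc:
  assumes "\<sigma> \<subseteq> P" "finite \<sigma>" "\<sigma> \<noteq> {}" "\<forall>x\<in>\<sigma>. \<forall>y\<in>\<sigma>. x \<subseteq> y \<or> y \<subseteq> x"
  shows "\<sigma> \<in> order_complex (P \<inter> \<sigma>)"
  using assms unfolding order_complex_def by blast

lemma simplex_XU: "\<sigma> \<in> order_complex (P \<inter> U) \<Longrightarrow> simplex_pts \<sigma> \<subseteq> XU P U"
  unfolding XU_def realization_set_def by blast

lemma cmb_simplex:
  assumes "f \<in> simplex_pts \<sigma>" "g \<in> simplex_pts \<sigma>" "l \<in> {0..1}"
  shows "cmb l f g \<in> simplex_pts \<sigma>"
proof -
  have "sum (cmb l f g) \<sigma> = (1 - l) * sum f \<sigma> + l * sum g \<sigma>"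
    by (simp add: cmb_def sum.distrib sum_distrib_left)
  then have "sum (cmb l f g) \<sigma> = 1" using assms by (simp add: simplex_pts_def)
  moreover have "0 \<le> cmb l f g v" for v
    using assms by (auto simp: simplex_pts_def cmb_def)
  moreover have "cmb l f g v = 0" if "v \<notin> \<sigma>" for v
    using assms that by (auto simp: simplex_pts_def cmb_def)
  ultimately show ?thesis unfolding simplex_pts_def by blast
qed

lemma dlt_simplex: "finite \<sigma> \<Longrightarrow> v \<in> \<sigma> \<Longrightarrow> dlt v \<in> simplex_pts \<sigma>"
  unfolding simplex_pts_def dlt_def by (auto simp: sum.delta')

lemma lp_image_simplex:
  assumes "a \<in> simplex_pts \<sigma>" "b \<in> simplex_pts \<sigma>"
  shows "path_image (lp a b) \<subseteq> simplex_pts \<sigma>"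
  using cmb_simplex[OF assms] by (auto simp: path_image_def lp_def)

lemma okp_lp:
  assumes "\<sigma> \<in> order_complex (P \<inter> U)" "finite U" "a \<in> simplex_pts \<sigma>" "b \<in> simplex_pts \<sigma>"
  shows "okp P (lp a b)"
  unfolding okp_def using lp_image_simplex[OF assms(3,4)] simplex_XU[OF assms(1)] assms(2) by auto

lemma HP_tri:
  assumes "\<sigma> \<in> order_complex (P \<inter> U)" "finite U"
    "a \<in> simplex_pts \<sigma>" "b \<in> simplex_pts \<sigma>" "c \<in> simplex_pts \<sigma>"
  shows "HP P (lp a b +++ lp b c) (lp a c)"
proof -
  have im: "path_image (lp a b +++ lp b c) \<subseteq> simplex_pts \<sigma>"
    using lp_image_simplex[OF assms(3,4)] lp_image_simplex[OF assms(4,5)]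
      path_image_join_subset[of "lp a b" "lp b c"] by blast
  have "homotopic_paths (simplex_pts \<sigma>) (lp a b +++ lp b c) (lp a c)"
  proof (rule seg_homotopy)
    show "path (lp a b +++ lp b c)" by (simp add: path_join)
    fix t l :: real assume t: "t \<in> {0..1}" and l: "l \<in> {0..1}"
    have "(lp a b +++ lp b c) t \<in> simplex_pts \<sigma>" using im t by (auto simp: path_image_def)
    moreover have "lp a c t \<in> simplex_pts \<sigma>" using lp_image_simplex[OF assms(3,5)] t
      by (auto simp: path_image_def)
    ultimately show "cmb l ((lp a b +++ lp b c) t) (lp a c t) \<in> simplex_pts \<sigma>"
      using cmb_simplex l by blast
  qed auto
  then have "homotopic_paths (XU P U) (lp a b +++ lp b c) (lp a c)"
    using simplex_XU[OF assms(1)] homotopic_paths_subset by blast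
  then show ?thesis unfolding HP_def using assms(2) by blast
qed

definition E :: "'a \<Rightarrow> 'a \<Rightarrow> real \<Rightarrow> 'a \<Rightarrow> real" where "E u v = lp (dlt u) (dlt v)"

lemma E_start [simp]: "pathstart (E u v) = dlt u" and E_finish [simp]: "pathfinish (E u v) = dlt v"
  by (simp_all add: E_def)
lemma E_rev [simp]: "reversepath (E u v) = E v u" by (simp add: E_def)
lemma E_same: "E u u = cpath (dlt u)" by (simp add: E_def lp_def cpath_def)

lemma okp_E:
  assumes "u \<in> P" "v \<in> P" "u \<subseteq> v \<or> v \<subseteq> u"
  shows "okp P (E u v)"
proof -
  have "{u, v} \<in> order_complex (P \<inter> {u, v})" using assms by (intro chain_oc) auto
  then show ?thesis unfolding E_def by (rule okp_lp) (auto intro: dlt_simplex)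
qed

lemma HP_E_tri:
  assumes "u \<in> P" "v \<in> P" "w \<in> P" "u \<subseteq> v \<or> v \<subseteq> u" "v \<subseteq> w \<or> w \<subseteq> v" "u \<subseteq> w \<or> w \<subseteq> u"
  shows "HP P (E u v +++ E v w) (E u w)"
proof -
  have "{u, v, w} \<in> order_complex (P \<inter> {u, v, w})" using assms by (intro chain_oc) auto
  then show ?thesis unfolding E_def by (rule HP_tri) (auto intro: dlt_simplex)
qed

lemma HP_E_inv:
  assumes "u \<in> P" "v \<in> P" "u \<subseteq> v \<or> v \<subseteq> u"
  shows "HP P (E u v +++ E v u) (cpath (dlt u))"
  using HP_rinv[OF okp_E[OF assms]] by simp


lemma XU_E:
  assumes "x \<in> XU P U"
  obtains \<sigma> where "\<sigma> \<in> order_complex (P \<inter> U)" "x \<in> simplex_pts \<sigma>"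
  using assms unfolding XU_def realization_set_def by blast

lemma supp_in_simplex: "x \<in> simplex_pts \<sigma> \<Longrightarrow> x w \<noteq> 0 \<Longrightarrow> w \<in> \<sigma>"
  unfolding simplex_pts_def by auto

lemma oc_props:
  assumes "\<sigma> \<in> order_complex (P \<inter> U)"
  shows "finite \<sigma>" "\<sigma> \<subseteq> P" "\<sigma> \<subseteq> U" "\<And>x y. x \<in> \<sigma> \<Longrightarrow> y \<in> \<sigma> \<Longrightarrow> x \<subseteq> y \<or> y \<subseteq> x"
  using assms unfolding order_complex_def by auto

lemma XU_pos_vertex:
  assumes "x \<in> XU P U" "x w \<noteq> 0"
  shows "w \<in> P"
proof -
  obtain \<sigma> where "\<sigma> \<in> order_complex (P \<inter> U)" "x \<in> simplex_pts \<sigma>" using assms(1) by (rule XU_E)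
  then have "w \<in> \<sigma>" using supp_in_simplex[of x \<sigma> w] assms(2) by blast
  then show ?thesis using oc_props(2)[OF \<open>\<sigma> \<in> _\<close>] by blast
qed

lemma XU_exists_pos:
  assumes "x \<in> XU P U"
  shows "\<exists>w. x w > 0"
proof (rule ccontr)
  assume "\<not> (\<exists>w. x w > 0)"
  then have z: "x w \<le> 0" for w by (simp add: not_less)
  obtain \<sigma> where "\<sigma> \<in> order_complex (P \<inter> U)" "x \<in> simplex_pts \<sigma>" using assms(1) by (rule XU_E)
  then have s1: "sum x \<sigma> = 1" and s0: "\<And>w. 0 \<le> x w" unfolding simplex_pts_def by auto
  have "x w = 0" for w using z[of w] s0[of w] by linarith
  then show False using s1 by simp
qed

lemma okp_lp_dlt:
  assumes "x \<in> XU P U" "finite U" "x w > 0"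
  shows "okp P (lp (dlt w) x)"
proof -
  obtain \<sigma> where s: "\<sigma> \<in> order_complex (P \<inter> U)" "x \<in> simplex_pts \<sigma>" using assms(1) by (rule XU_E)
  then have "w \<in> \<sigma>" using supp_in_simplex assms(3) by force
  then have "dlt w \<in> simplex_pts \<sigma>" using oc_props(1)[OF s(1)] by (intro dlt_simplex)
  then show ?thesis using okp_lp[OF s(1) assms(2)] s(2) by blast
qed

lemma indep:
  assumes cok: "\<forall>w\<in>P. okp P (c w) \<and> pathfinish (c w) = dlt w"
    and cedge: "\<forall>u\<in>P. \<forall>v\<in>P. (u \<subseteq> v \<or> v \<subseteq> u) \<longrightarrow> HP P (c u +++ E u v) (c v)"
    and x: "x \<in> XU P U" "finite U" "x u > 0" "x v > 0"
  shows "HP P (c u +++ lp (dlt u) x) (c v +++ lp (dlt v) x)"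
proof -
  obtain \<sigma> where s: "\<sigma> \<in> order_complex (P \<inter> U)" "x \<in> simplex_pts \<sigma>" using x(1) by (rule XU_E)
  have uv: "u \<in> \<sigma>" "v \<in> \<sigma>" using supp_in_simplex s(2) x(3,4) by force+
  then have uvP: "u \<in> P" "v \<in> P" and cmp: "v \<subseteq> u \<or> u \<subseteq> v" using oc_props[OF s(1)] by blast+
  have du: "dlt u \<in> simplex_pts \<sigma>" and dv: "dlt v \<in> simplex_pts \<sigma>"
    using uv oc_props(1)[OF s(1)] by (auto intro: dlt_simplex)
  have okc: "okp P (c v)" "okp P (c u)" using cok uvP by auto
  have okE: "okp P (E v u)" using okp_E uvP cmp by blast
  have okl: "okp P (lp (dlt u) x)" using okp_lp[OF s(1) x(2) du s(2)] .
  have e: "HP P (c v +++ E v u) (c u)" using cedge uvP cmp by blast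
  have 1: "HP P (c u +++ lp (dlt u) x) ((c v +++ E v u) +++ lp (dlt u) x)"
    by (rule HP_congR[OF HP_sym[OF e] okl]) (use cok uvP in simp)
  have 2: "HP P ((c v +++ E v u) +++ lp (dlt u) x) (c v +++ (E v u +++ lp (dlt u) x))"
    by (rule HP_sym, rule HP_assoc) (use okc okE okl cok uvP in auto)
  have 3: "HP P (E v u +++ lp (dlt u) x) (lp (dlt v) x)"
    unfolding E_def by (rule HP_tri[OF s(1) x(2) dv du s(2)])
  have 4: "HP P (c v +++ (E v u +++ lp (dlt u) x)) (c v +++ lp (dlt v) x)"
    by (rule HP_congL[OF 3 okc(1)]) (use cok uvP in simp)
  show ?thesis using HP_trans[OF 1 HP_trans[OF 2 4]] .
qed

lemma partition_lemma:
  fixes p :: "real \<Rightarrow> 'v set \<Rightarrow> real"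
  assumes pp: "path p" and ip: "path_image p \<subseteq> XU P U"
  shows "\<exists>n>0. \<exists>v. \<forall>k<n. \<forall>t\<in>{real k / real n .. real (Suc k) / real n}. p t (v k) > 0"
proof -
  define cl where "cl = (\<lambda>t::real. max 0 (min 1 t))"
  define p' where "p' = (\<lambda>t. p (cl t))"
  have ccl: "continuous_on UNIV cl" unfolding cl_def by (intro continuous_intros)
  have cl01: "cl t \<in> {0..1}" for t unfolding cl_def by auto
  have cl_id: "t \<in> {0..1} \<Longrightarrow> cl t = t" for t unfolding cl_def by auto
  have cp': "continuous_on UNIV p'"
    unfolding p'_def using pp unfolding path_def
    by (rule continuous_on_compose2[OF _ ccl]) (use cl01 in auto)
  define GG where "GG = (\<lambda>w. {t. p' t w > 0}) ` UNIV"
  have opn: "open G" if GGG: "G \<in> GG" for G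
  proof -
    obtain w where w: "G = {t. p' t w > 0}" using GGG unfolding GG_def by blast
    have "continuous_on UNIV (\<lambda>t. p' t w)" using cp' by (rule continuous_on_product_then_coordinatewise)
    then have "open {t. 0 < p' t w}" by (intro open_Collect_less continuous_intros) auto
    then show ?thesis using w by simp
  qed
  have cov: "{0..1} \<subseteq> \<Union>GG"
  proof
    fix t :: real assume t: "t \<in> {0..1}"
    then have "p t \<in> XU P U" using ip by (auto simp: path_image_def)
    then obtain w where "p t w > 0" using XU_exists_pos by blast
    then have "t \<in> {t. p' t w > 0}" using cl_id[OF t] by (simp add: p'_def)
    then show "t \<in> \<Union>GG" unfolding GG_def by blast
  qed
  obtain e where e: "0 < e" "\<And>x. x \<in> {0..1} \<Longrightarrow> \<exists>G\<in>GG. ball x e \<subseteq> G"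
    using Heine_Borel_lemma[OF compact_Icc cov opn] by metis
  obtain n :: nat where n: "1 / e < real n" using reals_Archimedean2 by blast
  have npos: "n > 0" using n e(1) by (metis less_numeral_extra(3) divide_pos_pos gr0I of_nat_0 zero_less_one order_less_trans)
  have ne: "1 / real n < e" using n e(1) npos by (simp add: divide_less_eq mult.commute)
  have "\<forall>k\<in>{..<n}. \<exists>w. \<forall>t\<in>{real k / real n .. real (Suc k) / real n}. p t w > 0"
  proof
    fix k assume k: "k \<in> {..<n}"
    have x01: "real k / real n \<in> {0..1}" using k by auto
    obtain G where G: "G \<in> GG" "ball (real k / real n) e \<subseteq> G" using e(2)[OF x01] by blast
    then obtain w where w: "G = {t. p' t w > 0}" unfolding GG_def by blast
    have "\<forall>t\<in>{real k / real n .. real (Suc k) / real n}. p t w > 0"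
    proof
      fix t assume t: "t \<in> {real k / real n .. real (Suc k) / real n}"
      have "real (Suc k) / real n \<le> 1" using k by auto
      then have k1: "real (Suc k) / real n \<le> 1" .
      moreover have a: "0 \<le> real k / real n" by simp
      moreover have b: "real k / real n \<le> t" "t \<le> real (Suc k) / real n" using t by auto
      ultimately have "0 \<le> t" "t \<le> 1" by linarith+
      then have t01: "t \<in> {0..1}" by simp
      have "real (Suc k) / real n - real k / real n = 1 / real n"
        by (simp add: diff_divide_distrib[symmetric])
      then have "dist (real k / real n) t < e" using t ne by (auto simp: dist_real_def)
      then have "t \<in> G" using G(2) by auto
      then show "p t w > 0" using w cl_id[OF t01] by (simp add: p'_def)
    qed
    then show "\<exists>w. \<forall>t\<in>{real k / real n .. real (Suc k) / real n}. p t w > 0" by blast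
  qed
  then obtain v where "\<forall>k\<in>{..<n}. \<forall>t\<in>{real k / real n .. real (Suc k) / real n}. p t (v k) > 0"
    by (metis bchoice)
  then show ?thesis using npos by auto
qed

lemma cmb_dlt_XU:
  assumes "x \<in> XU P U" "x w > 0" "l \<in> {0..1}"
  shows "cmb l x (dlt w) \<in> XU P U"
proof -
  obtain \<sigma> where s: "\<sigma> \<in> order_complex (P \<inter> U)" "x \<in> simplex_pts \<sigma>" using assms(1) by (rule XU_E)
  then have "w \<in> \<sigma>" using supp_in_simplex assms(2) by force
  then have "dlt w \<in> simplex_pts \<sigma>" using oc_props(1)[OF s(1)] by (intro dlt_simplex)
  then have "cmb l x (dlt w) \<in> simplex_pts \<sigma>" using cmb_simplex s(2) assms(3) by blast
  then show ?thesis using simplex_XU[OF s(1)] by blast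
qed

lemma HP_of: "homotopic_paths (XU P U) p q \<Longrightarrow> finite U \<Longrightarrow> HP P p q"
  unfolding HP_def by blast

lemma okp_of: "path p \<Longrightarrow> path_image p \<subseteq> XU P U \<Longrightarrow> finite U \<Longrightarrow> okp P p"
  unfolding okp_def by blast

lemma core_loop:
  fixes P :: "'v set set" and c :: "'v set \<Rightarrow> real \<Rightarrow> 'v set \<Rightarrow> real"
  assumes cok: "\<forall>w\<in>P. okp P (c w) \<and> pathfinish (c w) = dlt w"
    and cedge: "\<forall>u\<in>P. \<forall>v\<in>P. (u \<subseteq> v \<or> v \<subseteq> u) \<longrightarrow> HP P (c u +++ E u v) (c v)"
    and pp: "path p" and ip: "path_image p \<subseteq> XU P U" and fU: "finite U"
    and lop: "pathfinish p = pathstart p"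
  shows "HP P p (cpath (pathstart p))"
proof -
  obtain n v where n: "n > 0" and v: "\<forall>k<n. \<forall>t\<in>{real k / real n .. real (Suc k) / real n}. p t (v k) > 0"
    using partition_lemma[OF pp ip] by blast
  define tt where "tt k = real k / real n" for k
  define a where "a k = p (tt k)" for k
  have tt01: "tt k \<in> {0..1}" if "k \<le> n" for k using that n by (auto simp: tt_def)
  have tt_mono: "tt k \<le> tt (Suc k)" for k by (simp add: tt_def divide_right_mono)
  have tt_pos: "0 < tt (Suc k)" for k using n by (simp add: tt_def)
  have tt0: "tt 0 = 0" and ttn: "tt n = 1" using n by (auto simp: tt_def)
  have pX: "p t \<in> XU P U" if "t \<in> {0..1}" for t using ip that by (auto simp: path_image_def)
  have aX: "a k \<in> XU P U" if "k \<le> n" for k using pX tt01 that by (simp add: a_def)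
  have posL: "a k (v k) > 0" if "k < n" for k
  proof -
    have "tt k \<in> {real k / real n .. real (Suc k) / real n}" using tt_mono[of k] by (simp add: tt_def)
    then show ?thesis using v that unfolding a_def by blast
  qed
  have posR: "a (Suc k) (v k) > 0" if "k < n" for k
  proof -
    have "tt (Suc k) \<in> {real k / real n .. real (Suc k) / real n}" using tt_mono[of k] by (simp add: tt_def)
    then show ?thesis using v that unfolding a_def by blast
  qed
  have vP: "v k \<in> P" if "k < n" for k
    using XU_pos_vertex[OF aX posL[OF that, THEN less_imp_neq, symmetric]] that by auto
  define r where "r w x = c w +++ lp (dlt w) x" for w x
  have r_start: "pathfinish (r w x) = x" for w x by (simp add: r_def)
  have okr: "okp P (r w x)" if "x \<in> XU P U" "x w > 0" for w x
  proof -
    have wP: "w \<in> P" using XU_pos_vertex[OF that(1)] that(2) by force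
    show ?thesis unfolding r_def
      by (rule okp_join) (use cok wP okp_lp_dlt[OF that(1) fU that(2)] in auto)
  qed
  have ind: "HP P (r u x) (r w x)" if "x \<in> XU P U" "x u > 0" "x w > 0" for u w x
    unfolding r_def using indep[OF _ cedge that(1) fU that(2,3)] cok by blast
  have oksp: "okp P (sp u w p)" if "u \<in> {0..1}" "w \<in> {0..1}" "u \<le> w" for u w
    using path_sp[OF pp that] ip fU by (intro okp_of) auto
  define r0 where "r0 = r (v 0) (a 0)"
  have okr0: "okp P r0" unfolding r0_def using okr aX posL n by auto
  have r0f: "pathfinish r0 = p 0" by (simp add: r0_def r_start a_def tt0)
  have claim: "\<forall>w. a k w > 0 \<longrightarrow> HP P (r0 +++ sp 0 (tt k) p) (r w (a k))" if "k \<le> n" for k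
    using that
  proof (induction k)
    case 0
    show ?case
    proof (intro allI impI)
      fix w assume w: "a 0 w > 0"
      have "sp 0 (tt 0) p = cpath (p 0)" by (simp add: tt0 sp_def cpath_def)
      then have "HP P (r0 +++ sp 0 (tt 0) p) r0" using HP_rid[OF okr0] r0f by simp
      moreover have "HP P r0 (r w (a 0))" unfolding r0_def using ind aX posL n w by auto
      ultimately show "HP P (r0 +++ sp 0 (tt 0) p) (r w (a 0))" by (rule HP_trans)
    qed
  next
    case (Suc k)
    then have kn: "k < n" by simp
    have IH: "HP P (r0 +++ sp 0 (tt k) p) (r (v k) (a k))"
      using Suc posL[OF kn] by simp
    define Q where "Q = sp (tt k) (tt (Suc k)) p"
    define A where "A = sp 0 (tt k) p"
    have Qs: "pathstart Q = a k" and Qf: "pathfinish Q = a (Suc k)" by (simp_all add: Q_def a_def)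
    have As: "pathstart A = p 0" and Af: "pathfinish A = a k" by (simp_all add: A_def a_def)
    have okQ: "okp P Q" unfolding Q_def using oksp tt01 kn tt_mono by (simp add: less_imp_le_nat)
    have okA: "okp P A" unfolding A_def using oksp tt01 kn by simp
    have s1: "HP P (r0 +++ sp 0 (tt (Suc k)) p) (r0 +++ (A +++ Q))"
    proof -
      have "homotopic_paths (XU P U) (A +++ Q) (sp 0 (tt (Suc k)) p)"
        unfolding A_def Q_def
        by (rule join_sp[OF pp ip]) (use tt01 kn tt_mono tt_pos in \<open>auto simp: less_imp_le_nat\<close>)
      then have "HP P (sp 0 (tt (Suc k)) p) (A +++ Q)" using fU HP_of HP_sym by blast
      then show ?thesis by (rule HP_congL[OF _ okr0]) (simp add: r0f)
    qed
    have s2: "HP P (r0 +++ (A +++ Q)) ((r0 +++ A) +++ Q)"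
      by (rule HP_assoc[OF okr0 okA okQ]) (simp_all add: r0f As Af Qs)
    have s3: "HP P ((r0 +++ A) +++ Q) (r (v k) (a k) +++ Q)"
      by (rule HP_congR[OF IH[folded A_def] okQ]) (simp add: Af Qs)
    define Y where "Y = lp (dlt (v k)) (a k)"
    define Z where "Z = lp (a k) (dlt (v k))"
    define W where "W = lp (dlt (v k)) (a (Suc k))"
    have okY: "okp P Y" unfolding Y_def using okp_lp_dlt[OF aX fU posL[OF kn]] kn by simp
    have okW: "okp P W" unfolding W_def using okp_lp_dlt[OF aX fU posR[OF kn]] kn by simp
    have okZ: "okp P Z" using okp_rev[OF okY] by (simp add: Y_def Z_def)
    have okc: "okp P (c (v k))" "pathfinish (c (v k)) = dlt (v k)" using cok vP[OF kn] by auto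
    have s4: "HP P (r (v k) (a k) +++ Q) (r (v k) (a k) +++ (Z +++ W))"
    proof -
      have "homotopic_paths (XU P U) Q (lp (pathstart Q) (dlt (v k)) +++ lp (dlt (v k)) (pathfinish Q))"
      proof (rule star_homotopy)
        show "path Q" using okQ unfolding okp_def by simp
        fix t l :: real assume t: "t \<in> {0..1}" and l: "l \<in> {0..1}"
        define s where "s = (tt (Suc k) - tt k) * t + tt k"
        have "s \<in> {real k / real n .. real (Suc k) / real n}"
        proof -
          have "(tt (Suc k) - tt k) * t \<le> (tt (Suc k) - tt k) * 1"
            by (rule mult_left_mono) (use t tt_mono in auto)
          moreover have "0 \<le> (tt (Suc k) - tt k) * t" using t tt_mono by auto
          ultimately show ?thesis unfolding s_def tt_def by auto
        qed
        then have "p s (v k) > 0" using v kn by blast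
        moreover have "s \<in> {0..1}" unfolding s_def
          using sp_aff_mem[of "tt k" "tt (Suc k)" t] tt01 kn tt_mono t by (simp add: less_imp_le_nat)
        ultimately have "cmb l (p s) (dlt (v k)) \<in> XU P U" using cmb_dlt_XU pX l by blast
        then show "cmb l (Q t) (dlt (v k)) \<in> XU P U" by (simp add: Q_def sp_def s_def)
      qed
      then have "HP P Q (Z +++ W)" using fU HP_of by (simp add: Qs Qf Z_def W_def)
      then show ?thesis by (rule HP_congL[OF _ okr[OF aX posL[OF kn]]]) (simp_all add: r_start Qs less_imp_le_nat kn)
    qed
    have s5: "HP P (r (v k) (a k) +++ (Z +++ W)) (r (v k) (a (Suc k)))"
    proof -
      have e1: "HP P ((c (v k) +++ Y) +++ (Z +++ W)) (c (v k) +++ (Y +++ (Z +++ W)))"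
        by (rule HP_sym, rule HP_assoc) (use okc okY okZ okW in \<open>auto simp: Y_def Z_def W_def intro: okp_join\<close>)
      have e2: "HP P (Y +++ (Z +++ W)) ((Y +++ Z) +++ W)"
        by (rule HP_assoc[OF okY okZ okW]) (simp_all add: Y_def Z_def W_def)
      have "HP P (Y +++ Z) (cpath (dlt (v k)))"
        using HP_rinv[OF okY] by (simp add: Y_def Z_def)
      then have e3: "HP P ((Y +++ Z) +++ W) (cpath (dlt (v k)) +++ W)"
        by (rule HP_congR[OF _ okW]) (simp add: Z_def W_def)
      have e4: "HP P (cpath (dlt (v k)) +++ W) W"
        using HP_lid[OF okW] by (simp add: W_def)
      have "HP P (Y +++ (Z +++ W)) W" using HP_trans[OF e2 HP_trans[OF e3 e4]] .
      then have e5: "HP P (c (v k) +++ (Y +++ (Z +++ W))) (c (v k) +++ W)"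
        by (rule HP_congL[OF _ okc(1)]) (simp add: okc(2) Y_def)
      show ?thesis using HP_trans[OF e1 e5] by (simp add: r_def Y_def W_def)
    qed
    show ?case
    proof (intro allI impI)
      fix w assume w: "a (Suc k) w > 0"
      have "HP P (r (v k) (a (Suc k))) (r w (a (Suc k)))"
        using ind[OF aX posR[OF kn] w] Suc.prems by simp
      then show "HP P (r0 +++ sp 0 (tt (Suc k)) p) (r w (a (Suc k)))"
        using HP_trans[OF s1 HP_trans[OF s2 HP_trans[OF s3 HP_trans[OF s4 s5]]]] HP_trans by blast
    qed
  qed
  have an: "a n = a 0" using lop by (simp add: a_def tt0 ttn pathfinish_def pathstart_def)
  have "HP P (r0 +++ sp 0 (tt n) p) (r (v 0) (a n))"
    using claim[of n] an posL n by simp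
  then have main: "HP P (r0 +++ p) r0" using ttn an by (simp add: r0_def)
  have okp': "okp P p" using pp ip fU by (rule okp_of)
  have ps: "pathstart p = p 0" by (simp add: pathstart_def)
  have f1: "HP P p (cpath (pathstart p) +++ p)" using HP_sym[OF HP_lid[OF okp']] .
  have f2: "HP P (cpath (pathstart p) +++ p) ((reversepath r0 +++ r0) +++ p)"
    by (rule HP_congR[OF HP_sym[OF HP_linv[OF okr0]] okp', simplified r0f ps[symmetric]]) simp
  have f3: "HP P ((reversepath r0 +++ r0) +++ p) (reversepath r0 +++ (r0 +++ p))"
    by (rule HP_sym, rule HP_assoc[OF okp_rev[OF okr0] okr0 okp']) (simp_all add: r0f ps)
  have f4: "HP P (reversepath r0 +++ (r0 +++ p)) (reversepath r0 +++ r0)"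
    by (rule HP_congL[OF main okp_rev[OF okr0]]) simp
  have f5: "HP P (reversepath r0 +++ r0) (cpath (pathstart p))"
    using HP_linv[OF okr0] r0f ps by simp
  show ?thesis using HP_trans[OF f1 HP_trans[OF f2 HP_trans[OF f3 HP_trans[OF f4 f5]]]] .
qed


locale ncgroup = group +
  assumes nc: "\<not> (\<exists>g\<in>carrier G. generate G {g} = carrier G)"
begin

lemma gen1_proper: "g \<in> carrier G \<Longrightarrow> generate G {g} \<noteq> carrier G"
  using nc by blast

lemma one_proper: "{\<one>} \<noteq> carrier G"
proof
  assume a: "{\<one>} = carrier G"
  have "generate G {\<one>} \<subseteq> carrier G" by (rule generate_incl) simp
  moreover have "\<one> \<in> generate G {\<one>}" by (rule generate.one)
  then have "carrier G \<subseteq> generate G {\<one>}" unfolding a[symmetric] by simp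
  ultimately have "generate G {\<one>} = carrier G" by (rule subset_antisym)
  then show False using gen1_proper by simp
qed

lemma coset_in_P: "x \<in> carrier G \<Longrightarrow> subgroup H G \<Longrightarrow> H \<noteq> carrier G \<Longrightarrow> x <# H \<in> coset_poset G"
  unfolding coset_poset_def by blast

lemma P_E:
  assumes "C \<in> coset_poset G"
  obtains a H where "a \<in> carrier G" "subgroup H G" "H \<noteq> carrier G" "C = a <# H"
  using assms unfolding coset_poset_def by blast

lemma sing_P: "x \<in> carrier G \<Longrightarrow> {x} \<in> coset_poset G"
proof -
  assume x: "x \<in> carrier G"
  have "x <# {\<one>} = {x}" using x by (simp add: l_coset_def)
  then show ?thesis using coset_in_P[OF x triv_subgroup one_proper] by simp
qed

lemma P_sub: "C \<in> coset_poset G \<Longrightarrow> C \<subseteq> carrier G"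
  by (metis P_E l_coset_subset_G subgroup.subset)

lemma P_nonempty: "C \<in> coset_poset G \<Longrightarrow> \<exists>g. g \<in> C"
proof -
  assume "C \<in> coset_poset G"
  then obtain a H where aH: "a \<in> carrier G" "subgroup H G" "C = a <# H" by (rule P_E)
  then have "a \<otimes> \<one> \<in> C" unfolding l_coset_def using subgroup.one_closed by fastforce
  then show ?thesis by blast
qed

definition Dc :: "'a \<Rightarrow> 'a \<Rightarrow> 'a set" where "Dc x y = x <# generate G {inv x \<otimes> y}"

lemma Dc_props:
  assumes "x \<in> carrier G" "y \<in> carrier G"
  shows "Dc x y \<in> coset_poset G" "x \<in> Dc x y" "y \<in> Dc x y"
proof -
  have ixy: "inv x \<otimes> y \<in> carrier G" using assms by simp
  have sg: "subgroup (generate G {inv x \<otimes> y}) G" using ixy by (intro generate_is_subgroup) auto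
  show "Dc x y \<in> coset_poset G" unfolding Dc_def
    using coset_in_P[OF assms(1) sg gen1_proper[OF ixy]] .
  have "x \<otimes> \<one> \<in> Dc x y" unfolding Dc_def l_coset_def using generate.one by fastforce
  then show "x \<in> Dc x y" using assms by simp
  have "x \<otimes> (inv x \<otimes> y) \<in> Dc x y" unfolding Dc_def l_coset_def using generate.incl by fastforce
  moreover have "x \<otimes> (inv x \<otimes> y) = y" using assms by (simp add: m_assoc[symmetric])
  ultimately show "y \<in> Dc x y" by simp
qed

lemma Dc_min:
  assumes "C \<in> coset_poset G" "x \<in> C" "y \<in> C"
  shows "Dc x y \<subseteq> C"
proof -
  obtain a H where aH: "a \<in> carrier G" "subgroup H G" "C = a <# H" using assms(1) by (rule P_E)
  have xG: "x \<in> carrier G" and yG: "y \<in> carrier G" using assms P_sub by blast+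
  have CxH: "C = x <# H" using l_repr_independence[OF _ aH(1,2)] assms(2) aH(3) by simp
  then obtain h where h: "h \<in> H" "y = x \<otimes> h" using assms(3) unfolding l_coset_def by blast
  have hG: "h \<in> carrier G" using h(1) aH(2) subgroup.subset by blast
  have "inv x \<otimes> y = h" using h(2) xG hG by (simp add: m_assoc[symmetric])
  then have "generate G {inv x \<otimes> y} \<subseteq> H" using h(1) aH(2) by (intro generate_subgroup_incl) auto
  then show ?thesis unfolding Dc_def CxH l_coset_def by blast
qed

lemma gen2_props:
  assumes "a \<in> carrier G" "b \<in> carrier G" "generate G {a, b} \<noteq> carrier G"
  shows "generate G {a, b} \<in> coset_poset G" "\<one> \<in> generate G {a, b}"
    "a \<in> generate G {a, b}" "b \<in> generate G {a, b}"
proof -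
  have sg: "subgroup (generate G {a, b}) G" using assms by (intro generate_is_subgroup) auto
  have "\<one> <# generate G {a, b} = generate G {a, b}"
    using assms by (intro lcos_mult_one generate_incl) auto
  then show "generate G {a, b} \<in> coset_poset G" using coset_in_P[OF one_closed sg assms(3)] by simp
  show "\<one> \<in> generate G {a, b}" by (rule generate.one)
  show "a \<in> generate G {a, b}" "b \<in> generate G {a, b}" by (auto intro: generate.incl)
qed

lemma gen3_props:
  assumes "z \<in> carrier G" "g \<in> carrier G" "h \<in> carrier G"
    "generate G {inv z \<otimes> g, inv z \<otimes> h} \<noteq> carrier G"
  shows "z <# generate G {inv z \<otimes> g, inv z \<otimes> h} \<in> coset_poset G"
    "z \<in> z <# generate G {inv z \<otimes> g, inv z \<otimes> h}"
    "g \<in> z <# generate G {inv z \<otimes> g, inv z \<otimes> h}"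
    "h \<in> z <# generate G {inv z \<otimes> g, inv z \<otimes> h}"
proof -
  let ?H = "generate G {inv z \<otimes> g, inv z \<otimes> h}"
  have sg: "subgroup ?H G" using assms by (intro generate_is_subgroup) auto
  show "z <# ?H \<in> coset_poset G" using coset_in_P[OF assms(1) sg assms(4)] .
  have "z \<otimes> \<one> \<in> z <# ?H" unfolding l_coset_def using generate.one by fastforce
  then show "z \<in> z <# ?H" using assms by simp
  have "z \<otimes> (inv z \<otimes> g) \<in> z <# ?H" unfolding l_coset_def using generate.incl[of _ "{inv z \<otimes> g, inv z \<otimes> h}"] by fastforce
  moreover have "z \<otimes> (inv z \<otimes> g) = g" using assms by (simp add: m_assoc[symmetric])
  ultimately show "g \<in> z <# ?H" by simp
  have "z \<otimes> (inv z \<otimes> h) \<in> z <# ?H" unfolding l_coset_def using generate.incl[of _ "{inv z \<otimes> g, inv z \<otimes> h}"] by fastforce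
  moreover have "z \<otimes> (inv z \<otimes> h) = h" using assms by (simp add: m_assoc[symmetric])
  ultimately show "h \<in> z <# ?H" by simp
qed

end


lemma HP_cancelR:
  assumes "okp P p" "okp P q" "pathfinish p = pathstart q"
  shows "HP P ((p +++ q) +++ reversepath q) p"
proof -
  have a: "HP P (p +++ (q +++ reversepath q)) ((p +++ q) +++ reversepath q)"
    by (rule HP_assoc[OF assms(1,2) okp_rev[OF assms(2)] assms(3)]) simp
  have b: "HP P (p +++ (q +++ reversepath q)) (p +++ cpath (pathstart q))"
    by (rule HP_congL[OF HP_rinv[OF assms(2)] assms(1)]) (simp add: assms(3))
  have c: "HP P (p +++ cpath (pathfinish p)) p" by (rule HP_rid[OF assms(1)])
  show ?thesis using HP_trans[OF HP_sym[OF a] HP_trans[OF b]] c assms(3) by simp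
qed

lemma HP_reassocL:
  assumes "okp P p" "okp P q" "okp P r" "pathfinish p = pathstart q" "pathfinish q = pathstart r"
    "HP P (q +++ r) s"
  shows "HP P ((p +++ q) +++ r) (p +++ s)"
proof -
  have 1: "HP P ((p +++ q) +++ r) (p +++ (q +++ r))"
    by (rule HP_sym[OF HP_assoc[OF assms(1-5)]])
  have 2: "HP P (p +++ (q +++ r)) (p +++ s)"
    by (rule HP_congL[OF assms(6) assms(1)]) (simp add: assms(4))
  show ?thesis using HP_trans[OF 1 2] .
qed

lemma HP_cancel_mid:
  assumes "okp P p" "okp P q" "okp P s" "pathfinish p = pathstart q" "pathstart s = pathstart q"
  shows "HP P ((p +++ q) +++ (reversepath q +++ s)) (p +++ s)"
proof -
  have 1: "HP P ((p +++ q) +++ (reversepath q +++ s)) (((p +++ q) +++ reversepath q) +++ s)"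
    by (rule HP_assoc[OF okp_join[OF assms(1,2,4)] okp_rev[OF assms(2)] assms(3)]) (simp_all add: assms(5))
  have 2: "HP P (((p +++ q) +++ reversepath q) +++ s) (p +++ s)"
    by (rule HP_congR[OF HP_cancelR[OF assms(1,2,4)] assms(3)]) (simp add: assms(5))
  show ?thesis using HP_trans[OF 1 2] .
qed

definition ee :: "'a set \<Rightarrow> 'a \<Rightarrow> 'a \<Rightarrow> real \<Rightarrow> 'a set \<Rightarrow> real" where
  "ee C x y = E {x} C +++ E C {y}"

definition gv :: "'a set \<Rightarrow> 'a" where "gv v = (SOME g. g \<in> v)"

lemma ee_start [simp]: "pathstart (ee C x y) = dlt {x}" and ee_finish [simp]: "pathfinish (ee C x y) = dlt {y}"
  by (simp_all add: ee_def)

context ncgroup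
begin

definition ec :: "'a \<Rightarrow> 'a \<Rightarrow> real \<Rightarrow> 'a set \<Rightarrow> real" where "ec x y = ee (Dc x y) x y"

definition cc :: "'a set \<Rightarrow> real \<Rightarrow> 'a set \<Rightarrow> real" where
  "cc v = ec \<one> (gv v) +++ E {gv v} v"

lemma ec_start [simp]: "pathstart (ec x y) = dlt {x}" and ec_finish [simp]: "pathfinish (ec x y) = dlt {y}"
  by (simp_all add: ec_def)

lemma okE_sub: "u \<in> coset_poset G \<Longrightarrow> v \<in> coset_poset G \<Longrightarrow> u \<subseteq> v \<Longrightarrow> okp (coset_poset G) (E u v)"
  using okp_E by blast

lemma okE_sup: "u \<in> coset_poset G \<Longrightarrow> v \<in> coset_poset G \<Longrightarrow> v \<subseteq> u \<Longrightarrow> okp (coset_poset G) (E u v)"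
  using okp_E by blast

lemma mem_P: "C \<in> coset_poset G \<Longrightarrow> x \<in> C \<Longrightarrow> {x} \<in> coset_poset G"
  using sing_P P_sub by blast

lemma okp_ee:
  assumes C: "C \<in> coset_poset G" and xy: "x \<in> C" "y \<in> C"
  shows "okp (coset_poset G) (ee C x y)"
proof -
  have xP: "{x} \<in> coset_poset G" and yP: "{y} \<in> coset_poset G" using mem_P C xy by blast+
  have s: "{x} \<subseteq> C" "{y} \<subseteq> C" using xy by auto
  have o1: "okp (coset_poset G) (E {x} C)" by (rule okE_sub[OF xP C s(1)])
  have o2: "okp (coset_poset G) (E C {y})" by (rule okE_sup[OF C yP s(2)])
  show ?thesis unfolding ee_def using okp_join[OF o1 o2] by simp
qed

lemma okp_ec: "x \<in> carrier G \<Longrightarrow> y \<in> carrier G \<Longrightarrow> okp (coset_poset G) (ec x y)"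
  unfolding ec_def using okp_ee[OF Dc_props(1,2,3)] by simp

lemma EI_sub:
  assumes C: "C \<in> coset_poset G" and D: "D \<in> coset_poset G" "D \<subseteq> C" and xy: "x \<in> D" "y \<in> D"
  shows "HP (coset_poset G) (ee C x y) (ee D x y)"
proof -
  let ?P = "coset_poset G"
  have xP: "{x} \<in> ?P" and yP: "{y} \<in> ?P" using mem_P D xy by blast+
  have t1: "HP ?P (E {x} D +++ E D C) (E {x} C)"
    by (rule HP_E_tri) (use xP yP C D xy in auto)
  have t2: "HP ?P (E D C +++ E C {y}) (E D {y})"
    by (rule HP_E_tri) (use xP yP C D xy in auto)
  have 1: "HP ?P (E {x} C +++ E C {y}) ((E {x} D +++ E D C) +++ E C {y})"
    by (rule HP_congR[OF HP_sym[OF t1]]) (use okE_sup C yP xy D in auto)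
  have 2: "HP ?P ((E {x} D +++ E D C) +++ E C {y}) (E {x} D +++ E D {y})"
    by (rule HP_reassocL[OF _ _ _ _ _ t2]) (use okE_sub okE_sup C D xP yP xy in auto)
  show ?thesis unfolding ee_def using HP_trans[OF 1 2] .
qed

lemma EI:
  assumes "C \<in> coset_poset G" "x \<in> C" "y \<in> C"
  shows "HP (coset_poset G) (ee C x y) (ec x y)"
proof -
  have xG: "x \<in> carrier G" and yG: "y \<in> carrier G" using assms P_sub by blast+
  note D = Dc_props[OF xG yG]
  show ?thesis unfolding ec_def by (rule EI_sub[OF assms(1) D(1) Dc_min[OF assms] D(2) D(3)])
qed

lemma Fill:
  assumes F: "F \<in> coset_poset G" and xyz: "x \<in> F" "y \<in> F" "z \<in> F"
  shows "HP (coset_poset G) (ec x y +++ ec y z) (ec x z)"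
proof -
  let ?P = "coset_poset G"
  have xP: "{x} \<in> ?P" and yP: "{y} \<in> ?P" and zP: "{z} \<in> ?P" using mem_P F xyz by blast+
  have 1: "HP ?P (ec x y +++ ec y z) (ee F x y +++ ee F y z)"
    by (rule HP_join) (use HP_sym[OF EI[OF F xyz(1,2)]] HP_sym[OF EI[OF F xyz(2,3)]] in auto)
  have o1: "okp ?P (E {x} F)" using okE_sub xP F xyz by simp
  have o2: "okp ?P (E F {y})" using okE_sup yP F xyz by simp
  have o3: "okp ?P (E F {z})" using okE_sup zP F xyz by simp
  have c: "HP ?P ((E {x} F +++ E F {y}) +++ (reversepath (E F {y}) +++ E F {z})) (E {x} F +++ E F {z})"
    by (rule HP_cancel_mid[OF o1 o2 o3]) simp_all
  have 2: "HP ?P (ee F x y +++ ee F y z) (ee F x z)"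
    using c by (simp add: ee_def)
  show ?thesis using HP_trans[OF 1 HP_trans[OF 2 EI[OF F xyz(1,3)]]] .
qed

lemma Tri:
  assumes hyp: "\<forall>x\<in>carrier G. \<forall>y\<in>carrier G. generate G {x, y} = carrier G \<longrightarrow>
           (\<exists>z\<in>carrier G. generate G {z, x} \<noteq> carrier G \<and> generate G {z, y} \<noteq> carrier G \<and>
              generate G {inv z \<otimes> x, inv z \<otimes> y} \<noteq> carrier G)"
    and gh: "g \<in> carrier G" "h \<in> carrier G"
  shows "HP (coset_poset G) (ec \<one> g +++ ec g h) (ec \<one> h)"
proof (cases "generate G {g, h} = carrier G")
  case False
  show ?thesis using Fill[OF gen2_props(1,2,3,4)[OF gh False]] .
next
  case True
  then obtain z where z: "z \<in> carrier G" "generate G {z, g} \<noteq> carrier G" "generate G {z, h} \<noteq> carrier G"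
    "generate G {inv z \<otimes> g, inv z \<otimes> h} \<noteq> carrier G"
    using bspec[OF bspec[OF hyp gh(1)] gh(2)] True by blast
  let ?P = "coset_poset G"
  have a1: "HP ?P (ec \<one> z +++ ec z g) (ec \<one> g)" using Fill[OF gen2_props(1,2,3,4)[OF z(1) gh(1) z(2)]] .
  have a2: "HP ?P (ec z g +++ ec g h) (ec z h)" using Fill[OF gen3_props[OF z(1) gh z(4)]] .
  have a3: "HP ?P (ec \<one> z +++ ec z h) (ec \<one> h)" using Fill[OF gen2_props(1,2,3,4)[OF z(1) gh(2) z(3)]] .
  have 1: "HP ?P (ec \<one> g +++ ec g h) ((ec \<one> z +++ ec z g) +++ ec g h)"
    by (rule HP_congR[OF HP_sym[OF a1]]) (use okp_ec gh in auto)
  have 2: "HP ?P ((ec \<one> z +++ ec z g) +++ ec g h) (ec \<one> z +++ ec z h)"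
    by (rule HP_reassocL[OF _ _ _ _ _ a2]) (use okp_ec gh z in auto)
  show ?thesis using HP_trans[OF 1 HP_trans[OF 2 a3]] .
qed

lemma gv_mem: "v \<in> coset_poset G \<Longrightarrow> gv v \<in> v"
  unfolding gv_def using someI_ex[OF P_nonempty] by simp

lemma cc_props:
  assumes "v \<in> coset_poset G"
  shows "okp (coset_poset G) (cc v)" "pathfinish (cc v) = dlt v" "pathstart (cc v) = dlt {\<one>}"
proof -
  have g: "gv v \<in> v" "gv v \<in> carrier G" using gv_mem assms P_sub by blast+
  show "okp (coset_poset G) (cc v)" unfolding cc_def
    by (rule okp_join) (use okp_ec okE_sub g mem_P assms in auto)
  show "pathfinish (cc v) = dlt v" "pathstart (cc v) = dlt {\<one>}" by (simp_all add: cc_def)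
qed

end


context ncgroup
begin

lemma cc_edge_sub:
  assumes hyp: "\<forall>x\<in>carrier G. \<forall>y\<in>carrier G. generate G {x, y} = carrier G \<longrightarrow>
           (\<exists>z\<in>carrier G. generate G {z, x} \<noteq> carrier G \<and> generate G {z, y} \<noteq> carrier G \<and>
              generate G {inv z \<otimes> x, inv z \<otimes> y} \<noteq> carrier G)"
    and uv: "u \<in> coset_poset G" "v \<in> coset_poset G" "u \<subseteq> v"
  shows "HP (coset_poset G) (cc u +++ E u v) (cc v)"
proof -
  let ?P = "coset_poset G"
  define g where "g = gv u"
  define h where "h = gv v"
  have g: "g \<in> u" "g \<in> v" "g \<in> carrier G" using gv_mem uv P_sub unfolding g_def by blast+
  have h: "h \<in> v" "h \<in> carrier G" using gv_mem uv P_sub unfolding h_def by blast+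
  have gP: "{g} \<in> ?P" and hP: "{h} \<in> ?P" using sing_P g h by blast+
  have o_ecg: "okp ?P (ec \<one> g)" using okp_ec g by simp
  have o_gu: "okp ?P (E {g} u)" using okE_sub[OF gP uv(1)] g by simp
  have o_uv: "okp ?P (E u v)" using okE_sub[OF uv] .
  have o_gv: "okp ?P (E {g} v)" using okE_sub[OF gP uv(2)] g by simp
  have o_vh: "okp ?P (E v {h})" using okE_sup[OF uv(2) hP] h by simp
  have o_hv: "okp ?P (E {h} v)" using okE_sub[OF hP uv(2)] h by simp
  have o_ee: "okp ?P (ee v g h)" using okp_ee[OF uv(2) g(2) h(1)] .
  have tri: "HP ?P (E {g} u +++ E u v) (E {g} v)"
    by (rule HP_E_tri) (use gP uv g in auto)
  have s1: "HP ?P ((ec \<one> g +++ E {g} u) +++ E u v) (ec \<one> g +++ E {g} v)"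
    by (rule HP_reassocL[OF o_ecg o_gu o_uv _ _ tri]) simp_all
  have s2: "HP ?P (E {g} v) (ee v g h +++ E {h} v)"
    using HP_sym[OF HP_cancelR[OF o_gv o_vh]] by (simp add: ee_def)
  have s3: "HP ?P (ec \<one> g +++ E {g} v) (ec \<one> g +++ (ee v g h +++ E {h} v))"
    by (rule HP_congL[OF s2 o_ecg]) simp
  have s4: "HP ?P (ec \<one> g +++ (ee v g h +++ E {h} v)) ((ec \<one> g +++ ee v g h) +++ E {h} v)"
    by (rule HP_assoc[OF o_ecg o_ee o_hv]) simp_all
  have s5: "HP ?P ((ec \<one> g +++ ee v g h) +++ E {h} v) ((ec \<one> g +++ ec g h) +++ E {h} v)"
    by (rule HP_congR[OF HP_congL[OF EI[OF uv(2) g(2) h(1)] o_ecg] o_hv]) simp_all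
  have s6: "HP ?P ((ec \<one> g +++ ec g h) +++ E {h} v) (ec \<one> h +++ E {h} v)"
    by (rule HP_congR[OF Tri[OF hyp g(3) h(2)] o_hv]) simp
  have "HP ?P ((ec \<one> g +++ E {g} u) +++ E u v) (ec \<one> h +++ E {h} v)"
    using HP_trans[OF s1 HP_trans[OF s3 HP_trans[OF s4 HP_trans[OF s5 s6]]]] .
  then show ?thesis unfolding cc_def g_def h_def .
qed

lemma cc_edge:
  assumes hyp: "\<forall>x\<in>carrier G. \<forall>y\<in>carrier G. generate G {x, y} = carrier G \<longrightarrow>
           (\<exists>z\<in>carrier G. generate G {z, x} \<noteq> carrier G \<and> generate G {z, y} \<noteq> carrier G \<and>
              generate G {inv z \<otimes> x, inv z \<otimes> y} \<noteq> carrier G)"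
    and uv: "u \<in> coset_poset G" "v \<in> coset_poset G" "u \<subseteq> v \<or> v \<subseteq> u"
  shows "HP (coset_poset G) (cc u +++ E u v) (cc v)"
proof (cases "u \<subseteq> v")
  case True
  then show ?thesis using cc_edge_sub[OF hyp uv(1,2)] by simp
next
  case False
  then have vu: "v \<subseteq> u" using uv(3) by simp
  let ?P = "coset_poset G"
  have a: "HP ?P (cc v +++ E v u) (cc u)" using cc_edge_sub[OF hyp uv(2,1) vu] .
  have o_uv: "okp ?P (E u v)" using okE_sup[OF uv(1,2) vu] .
  have o_vu: "okp ?P (E v u)" using okE_sub[OF uv(2,1) vu] .
  have 1: "HP ?P (cc u +++ E u v) ((cc v +++ E v u) +++ E u v)"
    by (rule HP_congR[OF HP_sym[OF a] o_uv]) (simp add: cc_props uv)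
  have 2: "HP ?P ((cc v +++ E v u) +++ reversepath (E v u)) (cc v)"
    by (rule HP_cancelR[OF cc_props(1)[OF uv(2)] o_vu]) (simp add: cc_props uv)
  show ?thesis using HP_trans[OF 1] 2 by simp
qed

end

lemma in_XU:
  assumes "f \<in> realization_set (order_complex P)" "{v. f v \<noteq> 0} \<subseteq> U"
  shows "f \<in> XU P U"
proof -
  obtain \<sigma> where s: "\<sigma> \<in> order_complex P" "f \<in> simplex_pts \<sigma>" using assms(1) unfolding realization_set_def by blast
  define \<tau> where "\<tau> = {v. f v \<noteq> 0}"
  have ts: "\<tau> \<subseteq> \<sigma>" using s(2) unfolding simplex_pts_def \<tau>_def by auto
  have sum1: "sum f \<sigma> = 1" using s(2) unfolding simplex_pts_def by auto
  have "sum f \<tau> = sum f \<sigma>"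
    using ts s(1) unfolding order_complex_def \<tau>_def by (intro sum.mono_neutral_left) auto
  then have st: "sum f \<tau> = 1" using sum1 by simp
  then have "\<tau> \<noteq> {}" by auto
  moreover have "\<forall>x\<in>\<tau>. \<forall>y\<in>\<tau>. x \<subseteq> y \<or> y \<subseteq> x"
    using ts s(1) unfolding order_complex_def by blast
  moreover have "finite \<tau>" using ts s(1) unfolding order_complex_def by (auto intro: finite_subset)
  moreover have "\<tau> \<subseteq> P \<inter> U" using ts s(1) assms(2) unfolding order_complex_def \<tau>_def by auto
  ultimately have "\<tau> \<in> order_complex (P \<inter> U)" unfolding order_complex_def by blast
  moreover have "f \<in> simplex_pts \<tau>" using s(2) st unfolding simplex_pts_def \<tau>_def by auto
  ultimately show ?thesis unfolding XU_def realization_set_def by blast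
qed

lemma const_loops:
  assumes "path \<gamma>" "path_image \<gamma> \<subseteq> S"
  shows "homotopic_loops S (cpath (pathstart \<gamma>)) (cpath (pathfinish \<gamma>))"
  unfolding homotopic_loops
proof (intro exI conjI ballI)
  show "continuous_on ({0..1} \<times> {0..1}) (\<lambda>y. \<gamma> (fst y))"
    using assms(1) unfolding path_def by (rule continuous_on_compose2) (auto intro!: continuous_intros)
  show "(\<lambda>y. \<gamma> (fst y)) \<in> {0..1} \<times> {0..1} \<rightarrow> S" using assms(2) by (auto simp: path_image_def)
qed (auto simp: cpath_def pathstart_def pathfinish_def)


theorem mainTheorem4:
  fixes G (structure)
  assumes "group G"
    and "\<not> (\<exists>g\<in>carrier G. generate G {g} = carrier G)"
    and "\<forall>x\<in>carrier G. \<forall>y\<in>carrier G. generate G {x, y} = carrier G \<longrightarrow>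
           (\<exists>z\<in>carrier G. generate G {z, x} \<noteq> carrier G \<and> generate G {z, y} \<noteq> carrier G \<and>
              generate G {inv z \<otimes> x, inv z \<otimes> y} \<noteq> carrier G)"
  shows "simply_connected_space (geom_realization (order_complex (coset_poset G)))"
proof -
  interpret ncgroup G using assms(1,2) by (simp add: ncgroup_def ncgroup_axioms_def)
  let ?P = "coset_poset G"
  let ?K = "order_complex ?P"
  let ?W = "geom_realization ?K"
  have cok: "\<forall>w\<in>?P. okp ?P (cc w) \<and> pathfinish (cc w) = dlt w"
    by (intro ballI conjI cc_props(1,2))
  have cedge: "\<forall>u\<in>?P. \<forall>v\<in>?P. (u \<subseteq> v \<or> v \<subseteq> u) \<longrightarrow> HP ?P (cc u +++ E u v) (cc v)"
    by (intro ballI impI cc_edge[OF assms(3)])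
  have finK: "\<forall>\<sigma>\<in>?K. finite \<sigma>" unfolding order_complex_def by blast
  have loopnull: "\<exists>U. finite U \<and> homotopic_loops (XU ?P U) p (cpath (p 0)) \<and> p 0 \<in> XU ?P U"
    if pin: "pathin ?W p" and p10: "p 1 = p 0" for p
  proof -
    have cm: "continuous_map (top_of_set {0..1}) ?W p" using pin unfolding pathin_def .
    then have "continuous_map (top_of_set {0..1}) (top_of_set (realization_set ?K)) p"
      by (rule continuous_map_geom_imp)
    then have pp: "path p" and pR: "p \<in> {0..1} \<rightarrow> realization_set ?K" by (auto simp: path_def)
    have "compactin (top_of_set {0..1}) {0..1::real}" by (simp add: compactin_subtopology)
    then have "compactin ?W (p ` {0..1})" by (rule image_compactin[OF _ cm])
    then obtain U where U: "finite U" "\<forall>f\<in>p ` {0..1}. {v. f v \<noteq> 0} \<subseteq> U"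
      using compactin_geom_finite_supp[OF _ finK] by blast
    have ip: "path_image p \<subseteq> XU ?P U" unfolding path_image_def
    proof
      fix f assume f: "f \<in> p ` {0..1}"
      then have "f \<in> realization_set ?K" using pR by auto
      then show "f \<in> XU ?P U" using in_XU U(2) f by blast
    qed
    have "HP ?P p (cpath (pathstart p))"
      by (rule core_loop[OF cok cedge pp ip U(1)]) (simp add: pathstart_def pathfinish_def p10)
    then obtain U' where U': "finite U'" "homotopic_paths (XU ?P U') p (cpath (p 0))"
      unfolding HP_def pathstart_def by blast
    then have "homotopic_loops (XU ?P U') p (cpath (p 0))"
      by (intro homotopic_paths_imp_homotopic_loops) (auto simp: pathstart_def pathfinish_def p10 cpath_def)
    moreover have "p 0 \<in> XU ?P U'"
      using homotopic_paths_imp_subset[OF U'(2)] pathstart_in_path_image[of p] by (auto simp: pathstart_def)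
    ultimately show ?thesis using U'(1) by blast
  qed
  have conn: "\<exists>q. okp ?P q \<and> pathstart q = dlt {\<one>} \<and> pathfinish q = x"
    if xU: "x \<in> XU ?P U" and fU0: "finite U" for x U
  proof -
    obtain w where w: "x w > 0" using XU_exists_pos[OF xU] by blast
    then have wP: "w \<in> ?P" using XU_pos_vertex[OF xU] by force
    have "okp ?P (cc w +++ lp (dlt w) x)"
      by (rule okp_join[OF cc_props(1)[OF wP] okp_lp_dlt[OF xU fU0 w]]) (simp add: cc_props wP)
    moreover have "pathstart (cc w +++ lp (dlt w) x) = dlt {\<one>}" by (simp add: cc_props wP)
    moreover have "pathfinish (cc w +++ lp (dlt w) x) = x" by simp
    ultimately show ?thesis by blast
  qed
  show ?thesis unfolding simply_connected_space_def
  proof (intro allI impI)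
    fix pp qq
    assume H: "pathin ?W pp \<and> pp 1 = pp 0 \<and> pathin ?W qq \<and> qq 1 = qq 0"
    obtain U1 where U1: "finite U1" "homotopic_loops (XU ?P U1) pp (cpath (pp 0))" "pp 0 \<in> XU ?P U1"
      using loopnull[of pp] H by blast
    obtain U2 where U2: "finite U2" "homotopic_loops (XU ?P U2) qq (cpath (qq 0))" "qq 0 \<in> XU ?P U2"
      using loopnull[of qq] H by blast
    obtain q1 where q1: "okp ?P q1" "pathstart q1 = dlt {\<one>}" "pathfinish q1 = pp 0"
      using conn[OF U1(3,1)] by blast
    obtain q2 where q2: "okp ?P q2" "pathstart q2 = dlt {\<one>}" "pathfinish q2 = qq 0"
      using conn[OF U2(3,1)] by blast
    have og: "okp ?P (reversepath q1 +++ q2)"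
      by (rule okp_join[OF okp_rev[OF q1(1)] q2(1)]) (simp add: q1 q2)
    then obtain U3 where U3: "finite U3" "path (reversepath q1 +++ q2)"
      "path_image (reversepath q1 +++ q2) \<subseteq> XU ?P U3" unfolding okp_def by blast
    define U where "U = U1 \<union> U2 \<union> U3"
    have fU: "finite U" using U1 U2 U3 unfolding U_def by simp
    have s1: "XU ?P U1 \<subseteq> XU ?P U" "XU ?P U2 \<subseteq> XU ?P U" "XU ?P U3 \<subseteq> XU ?P U"
      unfolding U_def by (auto intro!: XU_mono)
    have h1: "homotopic_loops (XU ?P U) pp (cpath (pp 0))" using homotopic_loops_subset[OF U1(2) s1(1)] .
    have h2: "homotopic_loops (XU ?P U) (cpath (qq 0)) qq" using homotopic_loops_subset[OF U2(2) s1(2)]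
      by (rule homotopic_loops_sym)
    have h3: "homotopic_loops (XU ?P U) (cpath (pp 0)) (cpath (qq 0))"
      using const_loops[OF U3(2) order_trans[OF U3(3) s1(3)]] q1 q2 by simp
    have hl: "homotopic_loops (XU ?P U) pp qq"
      using homotopic_loops_trans[OF h1 homotopic_loops_trans[OF h3 h2]] .
    have Lfin: "finite (order_complex (?P \<inter> U))"
    proof (rule finite_subset)
      show "order_complex (?P \<inter> U) \<subseteq> Pow (?P \<inter> U)" unfolding order_complex_def by blast
      show "finite (Pow (?P \<inter> U))" using fU by simp
    qed
    have Lsub: "order_complex (?P \<inter> U) \<subseteq> ?K" by (rule order_complex_mono) blast
    have cid: "continuous_map (top_of_set (XU ?P U)) ?W id"
      by (rule continuous_map_into_geom[OF Lfin Lsub]) (simp add: XU_def)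
    have "homotopic_with (\<lambda>r. pathfinish r = pathstart r) (top_of_set {0..1}) (top_of_set (XU ?P U)) pp qq"
      using hl unfolding homotopic_loops_def .
    then have "homotopic_with (\<lambda>rr. rr (1::real) = rr 0) (top_of_set {0..1}) ?W (id \<circ> pp) (id \<circ> qq)"
      by (rule homotopic_with_compose_continuous_map_left[OF _ cid]) (simp add: pathstart_def pathfinish_def)
    then show "homotopic_with (\<lambda>rr. rr (1::real) = rr 0) (subtopology euclideanreal {0..1}) ?W pp qq"
      by simp
  qed
qed


end
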